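(* Let $p>3$ be a prime, $\mathbf{K}$ a finite field of characteristic $p$, $\mathbb{Q}_q$ the unramified extension of $\mathbb{Q}_p$ with residue field $\mathbf{K}$ and $\mathbb{Z}_q$ its ring of integers. Let $\ell>2$ be a prime different from $p$. Let $\bar E: y^2=x^3+\bar a_4x+\bar a_6$ and $\bar E': y^2=x^3+\bar a'_4x+\bar a'_6$ be elliptic curves over $\mathbb{Q}_q$ with $\bar a_4,\bar a_6,\bar a'_4,\bar a'_6\in\mathbb{Z}_q$, where $\bar E$ lifts an elliptic curve $E/\mathbf{K}$ and $\bar E'$ is related to $\bar E$ by a normalized isogeny of degree $\ell$ whose reduction is a normalized $\ell$-isogeny of $E$ over $\mathbf{K}$, and suppose these four coefficients are known to $p$-adic (absolute) precision $\mu$, i.e. modulo $p^\mu$. Run the algorithm below over $\mathbb{Z}_q$ (with $p$-adic arithmetic) with length parameter $4\ell$, $\alpha=0$, $\beta=1$, $H(z)=\bar a'_6z^6+\bar a'_4z^4+1$ and $G(x)=1/(\bar a_6x^6+\bar a_4x^4+1)$. If $\mu>\mathrm{Loss}(p,\ell)$, then the polynomials $U,V,J,S$ computed by the algorithm have $p$-adic integer coefficients, and the result $S$ has $p$-adic precision at least $\mu-\mathrm{Loss}(p,\ell)$. Algorithm (with length parameter $m=4\ell$): set $d\leftarrow 2$, $U\leftarrow 1/\beta$, $J\leftarrow 1$, $V\leftarrow 1$, $S\leftarrow \alpha+\beta x+\big[(G'(0)+H'(\alpha)\beta^3)/(4\beta)\big]x^2$. While $d<m-1$: $U\leftarrow U(2-S'U)\bmod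 x^d$; $V\leftarrow \big(V+J(H\circ S)(2-VJ)\big)/2\bmod x^d$; $J\leftarrow J(2-VJ)\bmod x^d$; $S\leftarrow S+V\cdot\int\big(G(H\circ S)-S'^2\big)(UJ/2)\,dx\bmod x^{\min(2d+1,m)}$; $d\leftarrow 2d$. Return $S$.
   Context: An isogeny $I(x,y)=\big(N(x)/D(x),\,c\,y\,(N(x)/D(x))'\big)$ with $N,D$ monic of degrees $\ell,\ell-1$ is called normalized when $c=1$. $'$ is the formal derivative, $H\circ S=H(S(x))$, and $\int\sum_i c_ix^i\,dx=\sum_i\frac{c_i}{i+1}x^{i+1}$ (formal antiderivative with zero constant term). For a positive integer $r$, $\mathrm{PDiv}(p,r)=\max\{k\in\mathbb{N}: p^k\mid r\}$. For integers $i\ge1$, $\mathrm{LpLoss}(p,\ell,i)=\max\{\mathrm{PDiv}(p,r): 2^i+1\le r\le\min(2^{i+1},4\ell-1)\}$, and $\mathrm{Loss}(p,\ell)=\sum_{1\le i<\log_2(4\ell-1)}\mathrm{LpLoss}(p,\ell,i)$. *)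

theory Defs
  imports "HOL-Computational_Algebra.Computational_Algebra"
begin

text \<open>A valuation v on a field (only meaningful on nonzero elements).
  pdiv v k x  means  x \<in> p^k Z_q  (x is zero or has valuation at least k).\<close>

definition pdiv :: "('a::field \<Rightarrow> int) \<Rightarrow> int \<Rightarrow> 'a \<Rightarrow> bool" where
  "pdiv v k x \<longleftrightarrow> x = 0 \<or> k \<le> v x"

abbreviation pint :: "('a::field \<Rightarrow> int) \<Rightarrow> 'a \<Rightarrow> bool" where
  "pint v x \<equiv> pdiv v 0 x"

text \<open>The field 'a with valuation v is (isomorphic to) Q_q, the unramified extension of Q_p
  with finite residue field: a complete discretely valued field of characteristic 0
  (type class), in which p is a uniformizer (v p = 1, i.e. unramified over Q_p),
  whose residue field Z_q / p Z_q is finite.\<close>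

definition unram_padic_field :: "nat \<Rightarrow> ('a::field_char_0 \<Rightarrow> int) \<Rightarrow> bool" where
  "unram_padic_field p v \<longleftrightarrow>
     (\<forall>x y. x \<noteq> 0 \<longrightarrow> y \<noteq> 0 \<longrightarrow> v (x * y) = v x + v y) \<and>
     (\<forall>x y. x \<noteq> 0 \<longrightarrow> y \<noteq> 0 \<longrightarrow> x + y \<noteq> 0 \<longrightarrow> min (v x) (v y) \<le> v (x + y)) \<and>
     v (of_nat p) = 1 \<and>
     (\<exists>R. finite R \<and> (\<forall>x. pint v x \<longrightarrow> (\<exists>r\<in>R. pint v r \<and> pdiv v 1 (x - r)))) \<and>
     (\<forall>s :: nat \<Rightarrow> 'a.
        (\<forall>k. \<exists>N. \<forall>m n. N \<le> m \<longrightarrow> N \<le> n \<longrightarrow> pdiv v k (s m - s n)) \<longrightarrow>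
        (\<exists>L. \<forall>k. \<exists>N. \<forall>n. N \<le> n \<longrightarrow> pdiv v k (s n - L)))"

definition pint_poly :: "('a::field \<Rightarrow> int) \<Rightarrow> 'a poly \<Rightarrow> bool" where
  "pint_poly v P \<longleftrightarrow> (\<forall>i. pint v (coeff P i))"

definition pint_fps :: "('a::field \<Rightarrow> int) \<Rightarrow> 'a fps \<Rightarrow> bool" where
  "pint_fps v F \<longleftrightarrow> (\<forall>i. pint v (F $ i))"

definition wcubic :: "'a::field \<Rightarrow> 'a \<Rightarrow> 'a poly" where
  "wcubic a4 a6 = [:a6, a4, 0, 1:]"

definition wdisc :: "'a::field \<Rightarrow> 'a \<Rightarrow> 'a" where
  "wdisc a4 a6 = 4 * a4 ^ 3 + 27 * a6 ^ 2"

text \<open>I(x,y) = (N/D, y (N/D)') maps y^2 = x^3+a4 x+a6 to y^2 = x^3+a4' x+a6', with N,D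
  monic and coprime of degrees l, l-1 (so the isogeny has degree l).  The curve identity
  (x^3+a4x+a6) ((N/D)')^2 = (N/D)^3 + a4' (N/D) + a6' is cleared of denominators.\<close>

definition normalized_isogeny ::
  "'a::field \<Rightarrow> 'a \<Rightarrow> 'a \<Rightarrow> 'a \<Rightarrow> nat \<Rightarrow> 'a poly \<Rightarrow> 'a poly \<Rightarrow> bool" where
  "normalized_isogeny a4 a6 a4' a6' l N D \<longleftrightarrow>
     lead_coeff N = 1 \<and> lead_coeff D = 1 \<and> degree N = l \<and> degree D = l - 1 \<and> coprime N D \<and>
     wcubic a4 a6 * (pderiv N * D - N * pderiv D) ^ 2
       = D * (N ^ 3 + smult a4' (N * D ^ 2) + smult a6' (D ^ 3))"

text \<open>The reduction mod p of integral polynomials N, D is coprime over the residue field: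
  a Bezout relation A N + B D = 1 holds modulo p Z_q.\<close>

definition red_coprime :: "('a::field \<Rightarrow> int) \<Rightarrow> 'a poly \<Rightarrow> 'a poly \<Rightarrow> bool" where
  "red_coprime v N D \<longleftrightarrow>
     (\<exists>A B. pint_poly v A \<and> pint_poly v B \<and>
            (\<forall>i. pdiv v 1 (coeff (A * N + B * D - 1) i)))"

definition PDiv :: "nat \<Rightarrow> nat \<Rightarrow> nat" where
  "PDiv p r = multiplicity p r"

definition LpLoss :: "nat \<Rightarrow> nat \<Rightarrow> nat \<Rightarrow> nat" where
  "LpLoss p l i = Max {PDiv p r | r. 2 ^ i + 1 \<le> r \<and> r \<le> min (2 ^ (i + 1)) (4 * l - 1)}"

text \<open>i ranges over 1 \<le> i < log2(4l-1), i.e. 1 \<le> i and 2^i < 4l-1.\<close>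
definition Loss :: "nat \<Rightarrow> nat \<Rightarrow> nat" where
  "Loss p l = (\<Sum>i\<in>{i. 1 \<le> i \<and> 2 ^ i < 4 * l - 1}. LpLoss p l i)"

definition pcomp_fps :: "'a::field poly \<Rightarrow> 'a fps \<Rightarrow> 'a fps" where
  "pcomp_fps H S = poly (map_poly fps_const H) S"

type_synonym 'a nstate = "nat \<times> 'a fps \<times> 'a fps \<times> 'a fps \<times> 'a fps"
  (* (d, U, V, J, S) *)

definition newton_init :: "'a::field \<Rightarrow> 'a \<Rightarrow> 'a fps \<Rightarrow> 'a poly \<Rightarrow> 'a nstate" where
  "newton_init \<alpha> \<beta> G H =
     (2, fps_const (inverse \<beta>), 1, 1,
      fps_const \<alpha> + fps_const \<beta> * fps_X
        + fps_const ((G $ 1 + poly (pderiv H) \<alpha> * \<beta> ^ 3) / (4 * \<beta>)) * fps_X ^ 2)"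

definition newton_step :: "nat \<Rightarrow> 'a::field_char_0 fps \<Rightarrow> 'a poly \<Rightarrow> 'a nstate \<Rightarrow> 'a nstate" where
  "newton_step m G H st =
     (case st of (d, U, V, J, S) \<Rightarrow>
       let U1 = fps_cutoff d (U * (2 - fps_deriv S * U));
           V1 = fps_cutoff d ((V + J * pcomp_fps H S * (2 - V * J)) * fps_const (1 / 2));
           J1 = fps_cutoff d (J * (2 - V1 * J));
           S1 = fps_cutoff (min (2 * d + 1) m)
                  (S + V1 * fps_integral0
                       ((G * pcomp_fps H S - (fps_deriv S) ^ 2) * (U1 * J1 * fps_const (1 / 2))))
       in (2 * d, U1, V1, J1, S1))"

definition newton_run :: "nat \<Rightarrow> 'a::field_char_0 \<Rightarrow> 'a \<Rightarrow> 'a fps \<Rightarrow> 'a poly \<Rightarrow> nat \<Rightarrow> 'a nstate" where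
  "newton_run m \<alpha> \<beta> G H k = (newton_step m G H ^^ k) (newton_init \<alpha> \<beta> G H)"

text \<open>All states (d,U,V,J,S) produced by the algorithm (initial one and after each pass of
  the while loop "while d < m - 1").\<close>
definition newton_states :: "nat \<Rightarrow> 'a::field_char_0 \<Rightarrow> 'a \<Rightarrow> 'a fps \<Rightarrow> 'a poly \<Rightarrow> 'a nstate set" where
  "newton_states m \<alpha> \<beta> G H =
     {newton_run m \<alpha> \<beta> G H k | k. \<forall>j<k. fst (newton_run m \<alpha> \<beta> G H j) < m - 1}"

definition newton_result :: "nat \<Rightarrow> 'a::field_char_0 \<Rightarrow> 'a \<Rightarrow> 'a fps \<Rightarrow> 'a poly \<Rightarrow> 'a fps" where
  "newton_result m \<alpha> \<beta> G H =
     (let k = (LEAST k. \<not> fst (newton_run m \<alpha> \<beta> G H k) < m - 1)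
      in snd (snd (snd (snd (newton_run m \<alpha> \<beta> G H k)))))"

definition state_pint :: "('a::field \<Rightarrow> int) \<Rightarrow> 'a nstate \<Rightarrow> bool" where
  "state_pint v st = (case st of (d, U, V, J, S) \<Rightarrow>
      pint_fps v U \<and> pint_fps v V \<and> pint_fps v J \<and> pint_fps v S)"

definition Hpol :: "'a::field \<Rightarrow> 'a \<Rightarrow> 'a poly" where
  "Hpol a4' a6' = [:1, 0, 0, 0, a4', 0, a6':]"

definition Gser :: "'a::field \<Rightarrow> 'a \<Rightarrow> 'a fps" where
  "Gser a4 a6 = inverse (fps_const a6 * fps_X ^ 6 + fps_const a4 * fps_X ^ 4 + 1)"

end

theory Submission
  imports Defs
begin

lemma Xdvd_iff: "(fps_X ^ k dvd (F :: 'a::field fps)) \<longleftrightarrow> (\<forall>i<k. F $ i = 0)"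
proof (cases "F = 0")
  case True then show ?thesis by simp
next
  case False
  have "fps_X ^ k dvd F \<longleftrightarrow> k \<le> subdegree F"
    using fps_dvd_iff[of "fps_X ^ k" F] False by (simp add: fps_X_power_subdegree)
  also have "\<dots> \<longleftrightarrow> (\<forall>i<k. F $ i = 0)"
  proof
    assume "k \<le> subdegree F" then show "\<forall>i<k. F $ i = 0" by (auto intro: nth_less_subdegree_zero)
  next
    assume h: "\<forall>i<k. F $ i = 0"
    show "k \<le> subdegree F"
    proof (rule ccontr)
      assume "\<not> k \<le> subdegree F"
      then have "F $ subdegree F = 0" using h by simp
      then show False using False by simp
    qed
  qed
  finally show ?thesis .
qed

lemma Xdvd_deriv:
  fixes F :: "'a::field_char_0 fps"
  assumes "fps_X ^ Suc k dvd F" shows "fps_X ^ k dvd fps_deriv F"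
  using assms unfolding Xdvd_iff by auto

lemma Xdvd_deriv_rev:
  fixes F :: "'a::field_char_0 fps"
  assumes "fps_X ^ k dvd fps_deriv F" "F $ 0 = 0" shows "fps_X ^ Suc k dvd F"
  unfolding Xdvd_iff
proof (intro allI impI)
  fix i assume "i < Suc k"
  show "F $ i = 0"
  proof (cases i)
    case 0 then show ?thesis using assms by simp
  next
    case (Suc j)
    then have "fps_deriv F $ j = 0" using assms(1) \<open>i < Suc k\<close> unfolding Xdvd_iff by auto
    then show ?thesis using Suc by (simp del: of_nat_Suc)
  qed
qed

lemma Xdvd_integral:
  fixes F :: "'a::field_char_0 fps"
  assumes "fps_X ^ k dvd F" shows "fps_X ^ Suc k dvd fps_integral0 F"
  using assms unfolding Xdvd_iff
  by (auto simp: fps_integral_def less_Suc_eq_0_disj)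

lemma Xdvd_cutoff:
  fixes F :: "'a::field fps"
  shows "fps_X ^ n dvd (fps_cutoff n F - F)"
  unfolding Xdvd_iff by auto

lemma Xdvd_mono: "fps_X ^ k dvd (F :: 'a::field fps) \<Longrightarrow> j \<le> k \<Longrightarrow> fps_X ^ j dvd F"
  by (meson dvd_trans le_imp_power_dvd)

lemma Xdvd_mult: "fps_X ^ a dvd (F :: 'a::field fps) \<Longrightarrow> fps_X ^ b dvd G \<Longrightarrow> fps_X ^ (a+b) dvd F * G"
  by (simp add: mult_dvd_mono power_add)

lemma Xdvd_unit_cancel:
  fixes F A :: "'a::field fps"
  assumes "fps_X ^ k dvd A * F" "A $ 0 \<noteq> 0" shows "fps_X ^ k dvd F"
proof -
  have "F = inverse A * (A * F)" using assms(2) by (simp add: inverse_mult_eq_1 mult.assoc[symmetric])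
  then show ?thesis using assms(1) by (metis dvd_mult)
qed

locale vf =
  fixes p :: nat and v :: "'a::field_char_0 \<Rightarrow> int"
  assumes vmult: "\<And>x y. x \<noteq> 0 \<Longrightarrow> y \<noteq> 0 \<Longrightarrow> v (x * y) = v x + v y"
    and vultra: "\<And>x y. x \<noteq> 0 \<Longrightarrow> y \<noteq> 0 \<Longrightarrow> x + y \<noteq> 0 \<Longrightarrow> min (v x) (v y) \<le> v (x + y)"
    and vp: "v (of_nat p) = 1"
    and pprime: "prime p" and p3: "p > 3"
begin

lemma v1: "v 1 = 0"
  using vmult[of 1 1] by simp

lemma v_uminus1: "v (-1) = 0"
  using vmult[of "-1" "-1"] v1 by simp

lemma v_uminus: "v (- x) = v x" if "x \<noteq> 0"
  using vmult[of "-1" x] that v_uminus1 by simp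

lemma v_inverse: "x \<noteq> 0 \<Longrightarrow> v (inverse x) = - v x"
  using vmult[of x "inverse x"] v1 by simp

lemma pdiv_0[simp]: "pdiv v k 0" by (simp add: pdiv_def)

lemma pdiv_mono: "pdiv v a x \<Longrightarrow> b \<le> a \<Longrightarrow> pdiv v b x"
  by (auto simp: pdiv_def)

lemma pdiv_add: "pdiv v k x \<Longrightarrow> pdiv v k y \<Longrightarrow> pdiv v k (x + y)"
  unfolding pdiv_def
proof -
  assume a: "x = 0 \<or> k \<le> v x" and b: "y = 0 \<or> k \<le> v y"
  show "x + y = 0 \<or> k \<le> v (x + y)"
  proof (cases "x = 0 \<or> y = 0 \<or> x + y = 0")
    case True then show ?thesis using a b by auto
  next
    case False then show ?thesis using a b vultra[of x y] by auto
  qed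
qed

lemma pdiv_uminus: "pdiv v k x \<Longrightarrow> pdiv v k (- x)"
  unfolding pdiv_def by (cases "x = 0") (auto simp: v_uminus)

lemma pdiv_uminus_iff: "pdiv v k (- x) = pdiv v k x"
  using pdiv_uminus[of k x] pdiv_uminus[of k "-x"] by auto

lemma pdiv_diff: "pdiv v k x \<Longrightarrow> pdiv v k y \<Longrightarrow> pdiv v k (x - y)"
  using pdiv_add[of k x "- y"] pdiv_uminus by auto

lemma pdiv_mult: "pdiv v a x \<Longrightarrow> pdiv v b y \<Longrightarrow> pdiv v (a + b) (x * y)"
  unfolding pdiv_def by (cases "x = 0"; cases "y = 0") (auto simp: vmult)

lemma pdiv_sum: "(\<And>i. i \<in> A \<Longrightarrow> pdiv v k (f i)) \<Longrightarrow> pdiv v k (\<Sum>i\<in>A. f i)"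
  by (induction A rule: infinite_finite_induct) (auto intro: pdiv_add)

lemma pint_1: "pint v 1" by (simp add: pdiv_def v1)

lemma pint_of_nat: "pint v (of_nat n)"
  by (induction n) (auto intro: pdiv_add pint_1)

lemma pint_of_int: "pint v (of_int z)"
proof (cases "z \<ge> 0")
  case True then show ?thesis using pint_of_nat[of "nat z"] by simp
next
  case False then show ?thesis using pint_of_nat[of "nat (-z)"] pdiv_uminus[of 0 "of_nat (nat (-z))"] by simp
qed

lemma v_of_nat_nonneg: "n \<noteq> 0 \<Longrightarrow> v (of_nat n) \<ge> 0"
  using pint_of_nat[of n] by (simp add: pdiv_def)

lemma v_coprime: assumes "\<not> p dvd u" shows "v (of_nat u) = 0"
proof -
  have u0: "u \<noteq> 0" using assms by (cases u) auto
  have "coprime p u" using pprime assms by (simp add: prime_imp_coprime)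
  then have cop: "coprime (int u) (int p)" by (simp add: coprime_commute)
  obtain a b :: int where ab0: "a * int u + b * int p = gcd (int u) (int p)"
    using bezout_int by blast
  have ab: "a * int u + b * int p = 1" using ab0 cop by (simp add: coprime_iff_gcd_eq_1)
  have eq1: "of_int a * of_nat u + of_int b * of_nat p = (1::'a)"
  proof -
    have "(of_int (a * int u + b * int p) :: 'a) = of_int 1" using ab by simp
    then show ?thesis by (simp only: of_int_add of_int_mult of_int_of_nat_eq of_int_1)
  qed
  have nn: "v (of_nat u) \<ge> 0" using v_of_nat_nonneg u0 by auto
  have nge: "\<not> v (of_nat u :: 'a) \<ge> 1"
  proof
    assume "v (of_nat u :: 'a) \<ge> 1"
    then have "pdiv v 1 (of_nat u :: 'a)" unfolding pdiv_def by blast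
    from pdiv_mult[OF pint_of_int[of a] this] have h1: "pdiv v 1 (of_int a * (of_nat u :: 'a))" by simp
    have "pdiv v 1 (of_nat p :: 'a)" unfolding pdiv_def using vp by simp
    from pdiv_mult[OF pint_of_int[of b] this] have h2: "pdiv v 1 (of_int b * (of_nat p :: 'a))" by simp
    have "pdiv v 1 (1::'a)" using pdiv_add[OF h1 h2] eq1 by simp
    then show False by (simp add: pdiv_def v1)
  qed
  from nn nge show ?thesis by linarith
qed

lemma v_of_nat: assumes "n \<noteq> 0" shows "v (of_nat n) = int (multiplicity p n)"
proof -
  have nu: "\<not> is_unit p" using pprime by auto
  obtain y where y: "n = p ^ multiplicity p n * y" "\<not> p dvd y"
    using multiplicity_decompose'[OF assms nu] by blast
  have p0: "(of_nat p :: 'a) \<noteq> 0" using pprime by auto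
  have y0: "y \<noteq> 0" using y(2) by (cases y) auto
  have pw: "v ((of_nat p :: 'a) ^ k) = int k" for k
  proof (induction k)
    case 0 then show ?case by (simp add: v1)
  next
    case (Suc k) then show ?case using vmult[of "of_nat p" "(of_nat p::'a) ^ k"] p0 vp by simp
  qed
  have "v (of_nat n :: 'a) = v ((of_nat p :: 'a) ^ multiplicity p n * of_nat y)"
    by (subst y(1)) simp
  also have "\<dots> = int (multiplicity p n) + v (of_nat y :: 'a)"
    using vmult p0 y0 pw by simp
  finally show ?thesis using v_coprime[OF y(2)] by simp
qed

lemma pint_half: "pint v (1/2 :: 'a)"
proof -
  have "\<not> p dvd 2"
  proof
    assume "p dvd 2"
    then have "p \<le> 2" by (rule dvd_imp_le) simp
    then show False using p3 by simp
  qed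
  then have "v (of_nat 2 :: 'a) = 0" by (rule v_coprime)
  then have v2: "v (2 :: 'a) = 0" by simp
  have "v (inverse (2::'a)) = 0" using v_inverse[of "2::'a"] v2 by simp
  then have "v (1/2::'a) = 0" by (simp only: inverse_eq_divide)
  then show ?thesis unfolding pdiv_def by simp
qed

lemma pdiv_div_nat: assumes "pdiv v e x" "n \<noteq> 0" "int (multiplicity p n) \<le> L"
  shows "pdiv v (e - L) (x / of_nat n)"
proof (cases "x = 0")
  case True then show ?thesis by simp
next
  case False
  have n0: "(of_nat n :: 'a) \<noteq> 0" using assms by simp
  have "v (x / of_nat n) = v x - v (of_nat n)"
    using vmult[of x "inverse (of_nat n)"] v_inverse[OF n0] False n0 by (simp add: divide_inverse)
  then show ?thesis using assms False v_of_nat[OF assms(2)] by (simp add: pdiv_def)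
qed

end

definition cv :: "('a::field \<Rightarrow> int) \<Rightarrow> int \<Rightarrow> 'a fps \<Rightarrow> bool" where
  "cv v e F \<longleftrightarrow> (\<forall>i. pdiv v e (F $ i))"

context vf begin

lemma cv_0[simp]: "cv v e 0" by (simp add: cv_def)
lemma cv_1: "cv v 0 1" by (simp add: cv_def pint_1)
lemma cv_add: "cv v e F \<Longrightarrow> cv v e G \<Longrightarrow> cv v e (F + G)" by (simp add: cv_def pdiv_add)
lemma cv_diff: "cv v e F \<Longrightarrow> cv v e G \<Longrightarrow> cv v e (F - G)" by (simp add: cv_def pdiv_diff)
lemma cv_uminus: "cv v e F \<Longrightarrow> cv v e (- F)" by (simp add: cv_def pdiv_uminus)
lemma cv_mono: "cv v e F \<Longrightarrow> d \<le> e \<Longrightarrow> cv v d F" by (meson cv_def pdiv_mono)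
lemma cv_const: "pdiv v e c \<Longrightarrow> cv v e (fps_const c)" by (simp add: cv_def)
lemma cv_X: "cv v 0 fps_X" by (simp add: cv_def fps_X_def pint_1)
lemma cv_numeral: "cv v 0 (numeral n)"
  using cv_const[OF pint_of_nat[of "numeral n"]] by (simp add: numeral_fps_const)
lemma cv_cutoff: "cv v e F \<Longrightarrow> cv v e (fps_cutoff n F)" by (simp add: cv_def)

lemma cv_mult: assumes "cv v a F" "cv v b G" shows "cv v (a + b) (F * G)"
  unfolding cv_def fps_mult_nth
proof
  fix n show "pdiv v (a + b) (\<Sum>i = 0..n. F $ i * G $ (n - i))"
    using assms by (intro pdiv_sum) (auto simp: cv_def intro: pdiv_mult)
qed

lemma cv_mult0: "cv v 0 F \<Longrightarrow> cv v e G \<Longrightarrow> cv v e (F * G)"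
  using cv_mult[of 0 F e G] by simp

lemma cv_mult0': "cv v e F \<Longrightarrow> cv v 0 G \<Longrightarrow> cv v e (F * G)"
  using cv_mult[of e F 0 G] by simp

lemma cv_power: "cv v 0 F \<Longrightarrow> cv v 0 (F ^ n)"
  by (induction n) (auto intro: cv_mult0 cv_1)

lemma cv_deriv: assumes "cv v e F" shows "cv v e (fps_deriv F)"
  unfolding cv_def
proof
  fix i
  have "pdiv v (0 + e) (of_nat (Suc i) * F $ Suc i)"
    by (rule pdiv_mult[OF pint_of_nat]) (use assms in \<open>simp add: cv_def\<close>)
  then show "pdiv v e (fps_deriv F $ i)" by (simp add: fps_deriv_nth del: of_nat_Suc)
qed

lemma cv_err_mult:
  assumes "cv v 0 A" "cv v 0 B'" "cv v e (A' - A)" "cv v e (B' - B)"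
  shows "cv v e (A' * B' - A * B)"
proof -
  have "A' * B' - A * B = (A' - A) * B' + A * (B' - B)" by (simp add: algebra_simps)
  then show ?thesis using assms by (metis cv_add cv_mult0 cv_mult0')
qed

lemma cv_close: "cv v 0 A \<Longrightarrow> cv v e (A' - A) \<Longrightarrow> 0 \<le> e \<Longrightarrow> cv v 0 A'"
  using cv_add[of 0 A "A' - A"] cv_mono[of e "A' - A" 0] by simp

lemma cv_inverse:
  assumes F: "cv v 0 F" and F0: "F $ 0 = 1"
  shows "cv v 0 (inverse F)"
proof -
  define G where "G = inverse F"
  have FG: "F * G = 1" unfolding G_def using F0 by (simp add: inverse_mult_eq_1')
  have "pint v (G $ n)" for n
  proof (induction n rule: less_induct)
    case (less n)
    show ?case
    proof (cases n)
      case 0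
      have "G $ 0 = 1" using F0 unfolding G_def by simp
      then show ?thesis using 0 by (simp add: pint_1)
    next
      case (Suc m)
      have "(F * G) $ n = 0" using FG Suc by simp
      moreover have "(F * G) $ n = F $ 0 * G $ n + (\<Sum>i = Suc 0..n. F $ i * G $ (n - i))"
        by (simp add: fps_mult_nth sum.atLeast_Suc_atMost)
      ultimately have "G $ n + (\<Sum>i = Suc 0..n. F $ i * G $ (n - i)) = 0" using F0 by simp
      then have "G $ n = - (\<Sum>i = Suc 0..n. F $ i * G $ (n - i))" by (simp add: eq_neg_iff_add_eq_0)
      moreover have "pint v (\<Sum>i = Suc 0..n. F $ i * G $ (n - i))"
        using F less by (intro pdiv_sum) (auto simp: cv_def intro!: pdiv_mult[where a=0 and b=0, simplified])
      ultimately show ?thesis by (simp add: pdiv_uminus)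
    qed
  qed
  then show ?thesis unfolding cv_def G_def by simp
qed

lemma cv_sqrt:
  assumes RR: "R * R = Y" and Y: "cv v 0 Y" and R0: "R $ 0 = 1"
  shows "cv v 0 R"
proof -
  have "pint v (R $ n)" for n
  proof (induction n rule: less_induct)
    case (less n)
    show ?case
    proof (cases n)
      case 0 then show ?thesis using R0 by (simp add: pint_1)
    next
      case (Suc m)
      have "Y $ n = (R * R) $ Suc m" using RR Suc by simp
      also have "\<dots> = (\<Sum>i = 0..Suc m. R $ i * R $ (Suc m - i))" by (rule fps_mult_nth)
      also have "\<dots> = R $ 0 * R $ Suc m + ((\<Sum>i = Suc 0..m. R $ i * R $ (Suc m - i)) + R $ Suc m * R $ 0)"
        by (simp add: sum.atLeast0_atMost_Suc sum.atLeast_Suc_atMost)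
      finally have "Y $ n = 2 * R $ n + (\<Sum>i = Suc 0..m. R $ i * R $ (Suc m - i))" using R0 Suc by simp
      then have eq: "R $ n = (1/2) * (Y $ n - (\<Sum>i = Suc 0..m. R $ i * R $ (Suc m - i)))" by simp
      have "pint v (\<Sum>i = Suc 0..m. R $ i * R $ (Suc m - i))"
        using less Suc by (intro pdiv_sum) (auto intro!: pdiv_mult[where a=0 and b=0, simplified])
      then have "pint v (Y $ n - (\<Sum>i = Suc 0..m. R $ i * R $ (Suc m - i)))"
        using Y by (auto simp: cv_def intro: pdiv_diff)
      then show ?thesis unfolding eq using pdiv_mult[OF pint_half] by fastforce
    qed
  qed
  then show ?thesis by (simp add: cv_def)
qed

lemma cv_of_poly: "pint_poly v P \<Longrightarrow> cv v 0 (fps_of_poly P)"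
  by (simp add: cv_def pint_poly_def fps_of_poly_nth)

lemma cv_integral_div:
  assumes "cv v e F" "\<And>n. 0 < n \<Longrightarrow> n < N \<Longrightarrow> F $ (n - 1) \<noteq> 0 \<Longrightarrow> int (multiplicity p n) \<le> L"
  shows "cv v (e - L) (fps_cutoff N (fps_integral0 F))"
  unfolding cv_def
proof
  fix n show "pdiv v (e - L) (fps_cutoff N (fps_integral0 F) $ n)"
  proof (cases "n = 0 \<or> N \<le> n \<or> F $ (n - 1) = 0")
    case True then show ?thesis by (auto simp: fps_integral_def)
  next
    case False
    then have "int (multiplicity p n) \<le> L" using assms(2) by auto
    then have "pdiv v (e - L) (F $ (n - 1) / of_nat n)"
      using pdiv_div_nat[of e "F $ (n-1)" n L] assms(1) False by (auto simp: cv_def)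
    then show ?thesis using False by (auto simp: fps_integral_def divide_inverse mult.commute)
  qed
qed

end

definition hp :: "'a::field \<Rightarrow> 'a \<Rightarrow> 'a fps \<Rightarrow> 'a fps" where
  "hp c4 c6 S = 1 + fps_const c4 * S ^ 4 + fps_const c6 * S ^ 6"

definition hd :: "'a::field \<Rightarrow> 'a \<Rightarrow> 'a fps \<Rightarrow> 'a fps" where
  "hd c4 c6 S = 4 * fps_const c4 * S ^ 3 + 6 * fps_const c6 * S ^ 5"

lemma pcomp_Hpol: "pcomp_fps (Hpol c4 c6) S = hp c4 c6 S"
  by (simp add: pcomp_fps_def Hpol_def hp_def map_poly_pCons) algebra

lemma fps_const_46: "fps_const (4::'a::field) = 4" "fps_const (6::'a::field) = 6"
  by (simp_all add: numeral_fps_const)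

lemma deriv_hp: "fps_deriv (hp c4 c6 (S :: 'a::field_char_0 fps)) = hd c4 c6 S * fps_deriv S"
  by (simp add: hp_def hd_def fps_deriv_power fps_const_46) algebra

lemma hp_dvd: "(S - T) dvd (hp c4 c6 S - hp c4 c6 T)"
proof -
  have "hp c4 c6 S - hp c4 c6 T = (S - T) * (fps_const c4 * (S^3 + S^2*T + S*T^2 + T^3)
     + fps_const c6 * (S^5 + S^4*T + S^3*T^2 + S^2*T^3 + S*T^4 + T^5))"
    unfolding hp_def by algebra
  then show ?thesis by simp
qed

lemma hp_taylor: "\<exists>K. hp c4 c6 (S + E) = hp c4 c6 S + hd c4 c6 S * E + E^2 * K"
proof -
  define K where "K = fps_const c4 * (6*S^2 + 4*S*E + E^2)
     + fps_const c6 * (15*S^4 + 20*S^3*E + 15*S^2*E^2 + 6*S*E^3 + E^4)"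
  have "hp c4 c6 (S + E) = hp c4 c6 S + hd c4 c6 S * E + E^2 * K"
    unfolding hp_def hd_def K_def by algebra
  then show ?thesis by blast
qed

lemma newton_alg:
  fixes G S U V J :: "'a::field_char_0 fps" and c4 c6 :: 'a
  assumes dh: "d = 2 * h" "1 \<le> h"
    and R: "fps_X ^ d dvd (G * hp c4 c6 S - (fps_deriv S)^2)"
    and Ui: "fps_X ^ h dvd (U * fps_deriv S - 1)"
    and Vi: "fps_X ^ h dvd (V^2 - hp c4 c6 S)"
    and Ji: "fps_X ^ h dvd (V * J - 1)"
    and S0: "S $ 0 = 0" and V0: "V $ 0 = 1"
    and Hs_def: "Hs = hp c4 c6 S"
    and U1_def: "U1 = fps_cutoff d (U * (2 - fps_deriv S * U))"
    and V1_def: "V1 = fps_cutoff d ((V + J * Hs * (2 - V * J)) * fps_const (1/2))"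
    and J1_def: "J1 = fps_cutoff d (J * (2 - V1 * J))"
    and I_def: "I = fps_integral0 ((G * Hs - (fps_deriv S)^2) * (U1 * J1 * fps_const (1/2)))"
    and S2_def: "S2 = S + V1 * I"
  shows "fps_X ^ d dvd (U1 * fps_deriv S - 1)"
    and "fps_X ^ d dvd (V1^2 - Hs)" and "V1 $ 0 = 1"
    and "fps_X ^ d dvd (V1 * J1 - 1)"
    and "fps_X ^ Suc d dvd I" and "fps_X ^ Suc d dvd (S2 - S)"
    and "fps_X ^ (2*d) dvd (G * hp c4 c6 S2 - (fps_deriv S2)^2)"
proof -
  define c where "c = (fps_const (1/2) :: 'a fps)"
  have c2: "2 * c = 1" unfolding c_def by (simp add: numeral_fps_const fps_const_mult[symmetric])
  define S' where "S' = fps_deriv S"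
  define Rr where "Rr = G * Hs - S'^2"
  have hh: "h + h = d" using dh by simp
  have Xhd: "fps_X ^ h dvd fps_X ^ d" using dh by (simp add: le_imp_power_dvd)
  define E1 where "E1 = U1 - U * (2 - S' * U)"
  have E1: "fps_X ^ d dvd E1" unfolding E1_def U1_def S'_def using Xdvd_cutoff by blast
  have "U1 * S' - 1 = - ((U * S' - 1) * (U * S' - 1)) + E1 * S'"
    unfolding E1_def by algebra
  moreover have "fps_X ^ d dvd (U * S' - 1) * (U * S' - 1)"
    using Xdvd_mult[OF Ui Ui] hh unfolding S'_def by simp
  ultimately show g1: "fps_X ^ d dvd (U1 * fps_deriv S - 1)"
    using E1 unfolding S'_def by (simp add: dvd_add)
  define a where "a = Hs - V^2"
  define b where "b = V * J - 1"
  have ha: "fps_X ^ h dvd a" using Vi unfolding a_def Hs_def by (metis dvd_minus_iff minus_diff_eq)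
  have hb: "fps_X ^ h dvd b" using Ji unfolding b_def .
  define Z where "Z = (V + J * Hs * (2 - V * J)) * c"
  define F where "F = - (V * b^2 + J * a * b) * c"
  have Zeq: "Z = V + J * a * c + F"
  proof -
    have "Hs = V^2 + a" "V * J = 1 + b" unfolding a_def b_def by simp_all
    then show ?thesis unfolding Z_def F_def using c2 by algebra
  qed
  have hF: "fps_X ^ d dvd F"
  proof -
    have "fps_X ^ d dvd b^2" using Xdvd_mult[OF hb hb] hh by (simp add: power2_eq_square)
    moreover have "fps_X ^ d dvd a * b" using Xdvd_mult[OF ha hb] hh by (simp add:)
    ultimately show ?thesis unfolding F_def by (simp add: dvd_add dvd_mult mult.assoc)
  qed
  define E2 where "E2 = V1 - Z"
  have E2: "fps_X ^ d dvd E2" unfolding E2_def V1_def Z_def c_def using Xdvd_cutoff by blast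
  have "V1^2 - Hs = E2 * (2 * Z + E2) + (a * b + J^2 * a^2 * c^2 + F * (2 * V + 2 * J * a * c + F))"
  proof -
    have "V1 = Z + E2" "Hs = V^2 + a" "V * J = 1 + b" unfolding E2_def a_def b_def by simp_all
    then show ?thesis using Zeq c2 by algebra
  qed
  moreover have "fps_X ^ d dvd a * b" using Xdvd_mult[OF ha hb] hh by (simp add:)
  moreover have "fps_X ^ d dvd a^2" using Xdvd_mult[OF ha ha] hh by (simp add: power2_eq_square)
  ultimately show g2: "fps_X ^ d dvd (V1^2 - Hs)"
    using E2 hF  by (simp add: dvd_add dvd_mult dvd_mult2 mult.assoc)
  have J0: "J $ 0 = 1"
  proof -
    have "(V * J - 1) $ 0 = 0" using Ji dh unfolding Xdvd_iff by auto
    then show ?thesis using V0 by simp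
  qed
  have Hs0: "Hs $ 0 = 1" unfolding Hs_def hp_def using S0 by (simp add: fps_nth_power_0)
  show V10: "V1 $ 0 = 1"
    using dh V0 J0 Hs0 unfolding V1_def by (simp add: fps_mult_nth_0 numeral_fps_const) 
  have "V1 * J - 1 = b + J^2 * a * c + (F + E2) * J"
  proof -
    have "V1 = Z + E2" "V * J = 1 + b" unfolding E2_def b_def by simp_all
    then show ?thesis using Zeq by algebra
  qed
  moreover have "fps_X ^ h dvd F" "fps_X ^ h dvd E2" using hF E2 Xhd by (auto intro: dvd_trans)
  ultimately have hb1: "fps_X ^ h dvd V1 * J - 1" using ha hb by (simp add: dvd_add dvd_mult dvd_mult2)
  define E3 where "E3 = J1 - J * (2 - V1 * J)"
  have E3: "fps_X ^ d dvd E3" unfolding E3_def J1_def using Xdvd_cutoff by blast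
  have "V1 * J1 - 1 = - ((V1 * J - 1) * (V1 * J - 1)) + E3 * V1"
    unfolding E3_def by algebra
  moreover have "fps_X ^ d dvd (V1 * J - 1) * (V1 * J - 1)" using Xdvd_mult[OF hb1 hb1] hh by (simp add:)
  ultimately show g3: "fps_X ^ d dvd (V1 * J1 - 1)" using E3  by (simp add: dvd_add)
  have Rr: "fps_X ^ d dvd Rr" using R unfolding Rr_def Hs_def S'_def .
  have II: "I = fps_integral0 (Rr * (U1 * J1 * c))" unfolding I_def Rr_def S'_def c_def ..
  have "fps_X ^ d dvd Rr * (U1 * J1 * c)" using Rr by simp
  then show gI: "fps_X ^ Suc d dvd I" unfolding II by (rule Xdvd_integral)
  then show "fps_X ^ Suc d dvd (S2 - S)" unfolding S2_def by simp
  define eps where "eps = V1 * I"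
  define I' where "I' = Rr * (U1 * J1 * c)"
  have dI: "fps_deriv I = I'" unfolding II I'_def by (rule fps_deriv_fps_integral)
  define e' where "e' = fps_deriv V1 * I + V1 * I'"
  have de: "fps_deriv S2 = S' + e'" unfolding S2_def e'_def S'_def using dI by (simp add: algebra_simps)
  obtain K where K: "hp c4 c6 (S + eps) = Hs + hd c4 c6 S * eps + eps^2 * K"
    using hp_taylor unfolding Hs_def by blast
  define Hd where "Hd = hd c4 c6 S"
  define W where "W = G * Hd * V1 - 2 * S' * fps_deriv V1"
  define al where "al = U1 * S' - 1"
  define be where "be = V1 * J1 - 1"
  have main: "G * hp c4 c6 S2 - (fps_deriv S2)^2
      = - Rr * (al + be + al * be) + I * W + G * eps^2 * K - e'^2"
  proof -
    have "hp c4 c6 S2 = Hs + Hd * eps + eps^2 * K" using K unfolding S2_def eps_def Hd_def by simp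
    moreover have "U1 * S' = 1 + al" "V1 * J1 = 1 + be" unfolding al_def be_def by simp_all
    moreover have "Rr = G * Hs - S'^2" unfolding Rr_def ..
    moreover have "e' = fps_deriv V1 * I + V1 * I'" unfolding e'_def ..
    moreover have "I' = Rr * (U1 * J1 * c)" unfolding I'_def ..
    moreover have "eps = V1 * I" unfolding eps_def ..
    ultimately show ?thesis unfolding de W_def using c2 by algebra
  qed
  have t1: "fps_X ^ (2*d) dvd Rr * (al + be + al * be)"
  proof -
    have "fps_X ^ d dvd al" "fps_X ^ d dvd be" using g1 g3 unfolding al_def be_def S'_def by auto
    then have "fps_X ^ d dvd (al + be + al * be)" by (simp add: dvd_add dvd_mult2)
    then show ?thesis using Xdvd_mult[OF Rr]  by (simp add: mult_2)
  qed
  have t2: "fps_X ^ (2*d) dvd I * W"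
  proof -
    define ga where "ga = V1^2 - Hs"
    have ga: "fps_X ^ d dvd ga" using g2 unfolding ga_def .
    have dga: "fps_deriv ga = 2 * V1 * fps_deriv V1 - Hd * S'"
      unfolding ga_def Hs_def Hd_def S'_def by (simp add: deriv_hp fps_deriv_power algebra_simps numeral_fps_const)
    have "fps_X ^ (d - 1) dvd fps_deriv ga" using Xdvd_deriv[of "d - 1" ga] ga dh  by simp
    moreover have "V1 * W = Hd * Rr + G * Hd * ga - S' * fps_deriv ga"
    proof -
      have "V1 * W = Hd * Rr + G * Hd * ga - S' * (2 * V1 * fps_deriv V1 - Hd * S')"
        unfolding W_def Rr_def ga_def by algebra
      then show ?thesis by (simp only: dga)
    qed
    moreover have "fps_X ^ (d - 1) dvd Rr" "fps_X ^ (d - 1) dvd ga"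
      using Xdvd_mono[OF Rr, of "d - 1"] Xdvd_mono[OF ga, of "d - 1"] by auto
    ultimately have "fps_X ^ (d - 1) dvd V1 * W" by (simp add: dvd_add dvd_diff dvd_mult dvd_mult2 mult.assoc)
    then have "fps_X ^ (d - 1) dvd W" using V10 Xdvd_unit_cancel  by force
    from Xdvd_mult[OF gI this] show ?thesis using dh  by simp
  qed
  have t3: "fps_X ^ (2*d) dvd G * eps^2 * K"
  proof -
    have "fps_X ^ Suc d dvd eps" using gI unfolding eps_def by simp
    from Xdvd_mult[OF this this]
    have "fps_X ^ (2 * d) dvd eps * eps" by (rule Xdvd_mono) auto
    then have "fps_X ^ (2 * d) dvd eps^2" by (simp add: power2_eq_square)
    then show ?thesis by (simp add: dvd_mult mult.commute)
  qed
  have t4: "fps_X ^ (2*d) dvd e'^2"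
  proof -
    have "fps_X ^ d dvd fps_deriv V1 * I" using gI Xdvd_mono[of "Suc d" I d]  by (simp add: dvd_mult)
    moreover have "fps_X ^ d dvd I'" unfolding I'_def using Rr by simp
    ultimately have "fps_X ^ d dvd e'" unfolding e'_def by (simp add: dvd_add dvd_mult)
    from Xdvd_mult[OF this this] show ?thesis
       by (simp add: power2_eq_square mult_2)
  qed
  show "fps_X ^ (2*d) dvd (G * hp c4 c6 S2 - (fps_deriv S2)^2)"
    unfolding main using t1 t2 t3 t4 
    by (simp add: dvd_add dvd_diff)
qed

lemma ode_unique:
  fixes S T G :: "'a::field_char_0 fps"
  assumes res: "fps_X ^ n dvd (G * hp c4 c6 S - (fps_deriv S)^2)"
    and T: "G * hp c4 c6 T = (fps_deriv T)^2"
    and "S $ 0 = 0" "T $ 0 = 0" "S $ 1 = 1" "T $ 1 = 1"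
  shows "fps_X ^ Suc n dvd (S - T)"
proof -
  have "k \<le> n \<Longrightarrow> fps_X ^ Suc k dvd (S - T)" for k
  proof (induction k)
    case 0 then show ?case using assms Xdvd_iff[of "Suc 0" "S - T"] by simp
  next
    case (Suc k)
    define dl where "dl = S - T"
    have IH: "fps_X ^ Suc k dvd dl" using Suc unfolding dl_def by simp
    have eq: "(fps_deriv S + fps_deriv T) * fps_deriv dl
        = - (G * hp c4 c6 S - (fps_deriv S)^2) + (G * hp c4 c6 T - (fps_deriv T)^2)
          + G * (hp c4 c6 S - hp c4 c6 T)"
      unfolding dl_def by (simp add: algebra_simps power2_eq_square)
    have "fps_X ^ Suc k dvd (G * hp c4 c6 S - (fps_deriv S)^2)"
      by (rule Xdvd_mono[OF res]) (use Suc in simp)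
    moreover have "fps_X ^ Suc k dvd (hp c4 c6 S - hp c4 c6 T)"
      using IH hp_dvd[of S T c4 c6] unfolding dl_def by (rule dvd_trans)
    ultimately have "fps_X ^ Suc k dvd (fps_deriv S + fps_deriv T) * fps_deriv dl"
      unfolding eq
    proof (intro dvd_add)
      assume A: "fps_X ^ Suc k dvd (G * hp c4 c6 S - (fps_deriv S)^2)"
        and B: "fps_X ^ Suc k dvd (hp c4 c6 S - hp c4 c6 T)"
      show "fps_X ^ Suc k dvd - (G * hp c4 c6 S - (fps_deriv S)^2)" using A by (simp only: dvd_minus_iff)
      show "fps_X ^ Suc k dvd (G * hp c4 c6 T - (fps_deriv T)^2)" using T by simp
      show "fps_X ^ Suc k dvd G * (hp c4 c6 S - hp c4 c6 T)" using B by (rule dvd_mult)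
    qed
    moreover have "(fps_deriv S + fps_deriv T) $ 0 \<noteq> 0" using assms by simp
    ultimately have "fps_X ^ Suc k dvd fps_deriv dl" by (rule Xdvd_unit_cancel)
    moreover have "dl $ 0 = 0" using assms unfolding dl_def by simp
    ultimately show ?case using Xdvd_deriv_rev unfolding dl_def by blast
  qed
  then show ?thesis by simp
qed

lemma step_unfold:
  "newton_step m G (Hpol c4 c6) (d, U, V, J, S) =
    (let U1 = fps_cutoff d (U * (2 - fps_deriv S * U));
         V1 = fps_cutoff d ((V + J * hp c4 c6 S * (2 - V * J)) * fps_const (1 / 2));
         J1 = fps_cutoff d (J * (2 - V1 * J));
         I = fps_integral0 ((G * hp c4 c6 S - (fps_deriv S) ^ 2) * (U1 * J1 * fps_const (1 / 2)))
     in (2 * d, U1, V1, J1, fps_cutoff (min (2 * d + 1) m) (S + V1 * I)))"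
  by (simp add: newton_step_def pcomp_Hpol Let_def)

definition ninv :: "'a::field_char_0 fps \<Rightarrow> 'a \<Rightarrow> 'a \<Rightarrow> nat \<Rightarrow> 'a fps \<Rightarrow> 'a fps \<Rightarrow> 'a fps \<Rightarrow> 'a fps \<Rightarrow> bool" where
  "ninv G c4 c6 d U V J S \<longleftrightarrow> (\<exists>h. d = 2 * h \<and> 1 \<le> h) \<and>
     fps_X ^ d dvd (G * hp c4 c6 S - (fps_deriv S)^2) \<and>
     fps_X ^ (d div 2) dvd (U * fps_deriv S - 1) \<and>
     fps_X ^ (d div 2) dvd (V^2 - hp c4 c6 S) \<and>
     fps_X ^ (d div 2) dvd (V * J - 1) \<and>
     S $ 0 = 0 \<and> S $ 1 = 1 \<and> V $ 0 = 1 \<and> (\<forall>i>d. S $ i = 0)"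

lemma step_facts:
  fixes G :: "'a::field_char_0 fps"
  assumes inv: "ninv G c4 c6 d U V J S"
    and st: "newton_step m G (Hpol c4 c6) (d, U, V, J, S) = (d', U1, V1, J1, S1)"
  shows "d' = 2 * d"
    and "\<exists>S2. S1 = fps_cutoff (min (2 * d + 1) m) S2 \<and> fps_X ^ (2 * d) dvd (G * hp c4 c6 S2 - (fps_deriv S2)^2)
           \<and> S2 $ 0 = 0 \<and> S2 $ 1 = 1"
    and "2 * d + 1 \<le> m \<Longrightarrow> ninv G c4 c6 d' U1 V1 J1 S1"
proof -
  obtain h where dh: "d = 2 * h" "1 \<le> h" using inv unfolding ninv_def by blast
  have h2: "d div 2 = h" using dh by simp
  note inv' = inv[unfolded ninv_def h2]
  define I where "I = fps_integral0 ((G * hp c4 c6 S - (fps_deriv S) ^ 2) * (U1 * J1 * fps_const (1 / 2)))"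
  have U1: "U1 = fps_cutoff d (U * (2 - fps_deriv S * U))"
    and V1: "V1 = fps_cutoff d ((V + J * hp c4 c6 S * (2 - V * J)) * fps_const (1 / 2))"
    and J1: "J1 = fps_cutoff d (J * (2 - V1 * J))"
    and S1: "S1 = fps_cutoff (min (2 * d + 1) m) (S + V1 * I)"
    and d': "d' = 2 * d"
    using st unfolding step_unfold I_def by (auto simp: Let_def)
  note NA = newton_alg[OF dh, of G c4 c6 S U V J "hp c4 c6 S" U1 V1 J1 I "S + V1 * I", OF _ _ _ _ _ _ refl U1 V1 J1 I_def refl]
  have NA1: "fps_X ^ d dvd U1 * fps_deriv S - 1" "fps_X ^ d dvd V1\<^sup>2 - hp c4 c6 S" "V1 $ 0 = 1"
     "fps_X ^ d dvd V1 * J1 - 1" "fps_X ^ Suc d dvd I" "fps_X ^ Suc d dvd S + V1 * I - S"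
     "fps_X ^ (2 * d) dvd G * hp c4 c6 (S + V1 * I) - (fps_deriv (S + V1 * I))\<^sup>2"
    using NA inv' by auto
  define S2 where "S2 = S + V1 * I"
  have S20: "S2 $ 0 = 0" "S2 $ 1 = 1"
  proof -
    have "\<forall>i<Suc d. (S2 - S) $ i = 0" using NA1(6) unfolding S2_def Xdvd_iff .
    then show "S2 $ 0 = 0" "S2 $ 1 = 1" using inv' dh by auto
  qed
  show "d' = 2 * d" by (rule d')
  show "\<exists>S2. S1 = fps_cutoff (min (2 * d + 1) m) S2 \<and> fps_X ^ (2 * d) dvd (G * hp c4 c6 S2 - (fps_deriv S2)^2)
           \<and> S2 $ 0 = 0 \<and> S2 $ 1 = 1"
    using S1 NA1(7) S20 unfolding S2_def by blast
  assume m: "2 * d + 1 \<le> m"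
  have S1': "S1 = fps_cutoff (2 * d + 1) S2" using S1 m unfolding S2_def by simp
  define E where "E = S1 - S2"
  have E: "fps_X ^ (2 * d + 1) dvd E" unfolding E_def S1' by (rule Xdvd_cutoff)
  have S1S: "fps_X ^ Suc d dvd S1 - S"
  proof -
    have "S1 - S = E + (S2 - S)" unfolding E_def by simp
    moreover have "fps_X ^ Suc d dvd E" by (rule Xdvd_mono[OF E]) simp
    ultimately show ?thesis using NA1(6) unfolding S2_def by simp
  qed
  have dS1S: "fps_X ^ d dvd fps_deriv S1 - fps_deriv S" using Xdvd_deriv[OF S1S] by simp
  have hS1S: "fps_X ^ Suc d dvd hp c4 c6 S1 - hp c4 c6 S" using S1S hp_dvd by (rule dvd_trans)
  have r1: "fps_X ^ (2 * d) dvd (G * hp c4 c6 S1 - (fps_deriv S1)^2)"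
  proof -
    have "G * hp c4 c6 S1 - (fps_deriv S1)^2 = (G * hp c4 c6 S2 - (fps_deriv S2)^2)
        + G * (hp c4 c6 S1 - hp c4 c6 S2) - fps_deriv E * (fps_deriv S1 + fps_deriv S2)"
      unfolding E_def by (simp add: algebra_simps power2_eq_square)
    moreover have "fps_X ^ (2 * d) dvd hp c4 c6 S1 - hp c4 c6 S2"
      using Xdvd_mono[OF E, of "2*d"] hp_dvd[of S1 S2 c4 c6] unfolding E_def by (auto intro: dvd_trans)
    moreover have "fps_X ^ (2 * d) dvd fps_deriv E" using Xdvd_deriv[of "2*d" E] E by simp
    ultimately show ?thesis using NA1(7) unfolding S2_def by (simp add: dvd_add dvd_diff dvd_mult dvd_mult2)
  qed
  have r2: "fps_X ^ d dvd U1 * fps_deriv S1 - 1"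
  proof -
    have eq: "U1 * fps_deriv S1 - 1 = (U1 * fps_deriv S - 1) + U1 * (fps_deriv S1 - fps_deriv S)"
      by (simp add: algebra_simps)
    have "fps_X ^ d dvd (U1 * fps_deriv S - 1) + U1 * (fps_deriv S1 - fps_deriv S)"
      using NA1(1) dS1S by (intro dvd_add dvd_mult)
    then show ?thesis unfolding eq .
  qed
  have r3: "fps_X ^ d dvd V1^2 - hp c4 c6 S1"
  proof -
    have eq: "V1^2 - hp c4 c6 S1 = (V1^2 - hp c4 c6 S) - (hp c4 c6 S1 - hp c4 c6 S)" by simp
    have "fps_X ^ d dvd (V1^2 - hp c4 c6 S) - (hp c4 c6 S1 - hp c4 c6 S)"
      by (rule dvd_diff[OF NA1(2) Xdvd_mono[OF hS1S, of d]]) simp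
    then show ?thesis unfolding eq .
  qed
  have r4: "S1 $ 0 = 0" "S1 $ 1 = 1" "\<forall>i>2*d. S1 $ i = 0" using S20 dh unfolding S1' S2_def by auto
  show "ninv G c4 c6 d' U1 V1 J1 S1"
    unfolding ninv_def d' using r1 r2 r3 r4 NA1(3,4) dh by auto
qed


lemma step_V0:
  fixes G :: "'a::field_char_0 fps"
  assumes inv: "ninv G c4 c6 d U V J S"
    and st: "newton_step m G (Hpol c4 c6) (d, U, V, J, S) = (d', U1, V1, J1, S1)"
  shows "V1 $ 0 = 1"
proof -
  obtain h where dh: "d = 2 * h" "1 \<le> h" using inv unfolding ninv_def by blast
  have h2: "d div 2 = h" using dh by simp
  note inv' = inv[unfolded ninv_def h2]
  have U1: "U1 = fps_cutoff d (U * (2 - fps_deriv S * U))"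
    and V1: "V1 = fps_cutoff d ((V + J * hp c4 c6 S * (2 - V * J)) * fps_const (1 / 2))"
    using st unfolding step_unfold by (auto simp: Let_def)
  define J1 where "J1 = fps_cutoff d (J * (2 - V1 * J))"
  define I where "I = fps_integral0 ((G * hp c4 c6 S - (fps_deriv S) ^ 2) * (U1 * J1 * fps_const (1 / 2)))"
  note NA = newton_alg[OF dh, of G c4 c6 S U V J "hp c4 c6 S" U1 V1 J1 I "S + V1 * I", OF _ _ _ _ _ _ refl U1 V1 J1_def I_def refl]
  show ?thesis using NA(3) inv' by auto
qed

lemma reflect_deriv:
  fixes x :: "'a::field_char_0"
  assumes x: "x \<noteq> 0"
  shows "x * poly (pderiv (reflect_poly p)) x =
     of_nat (degree p) * x ^ degree p * poly p (inverse x) - x ^ degree p * inverse x * poly (pderiv p) (inverse x)"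
proof (induction p rule: pCons_induct)
  case 0 then show ?case by simp
next
  case (pCons a p)
  show ?case
  proof (cases "p = 0")
    case True then show ?thesis by simp
  next
    case False
    have IH: "x * poly (pderiv (reflect_poly p)) x =
     of_nat (degree p) * x ^ degree p * poly p (inverse x) - x ^ degree p * inverse x * poly (pderiv p) (inverse x)"
      by (rule pCons.IH)
    have "x * poly (pderiv (reflect_poly (pCons a p))) x
        = x * poly (pderiv (reflect_poly p)) x + of_nat (Suc (degree p)) * a * x ^ Suc (degree p)"
      using False x by (simp add: reflect_poly_pCons' pderiv_add pderiv_monom poly_monom algebra_simps)
    also have "\<dots> = of_nat (degree (pCons a p)) * x ^ degree (pCons a p) * poly (pCons a p) (inverse x)
        - x ^ degree (pCons a p) * inverse x * poly (pderiv (pCons a p)) (inverse x)"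
      unfolding IH using False x by (simp add: pderiv_pCons field_simps)
    finally show ?thesis .
  qed
qed


lemma iso_field_identity:
  fixes y x A Nx Dx Nd Dd L a4 a6 a4' a6' :: "'a::field"
  assumes xy: "x * y = 1"
    and iso: "(x^3 + a4 * x + a6) * (Nd * Dx - Nx * Dd)^2 = Dx * (Nx^3 + a4' * (Nx * Dx^2) + a6' * Dx^3)"
  shows "(2 * (A * Dx) * (y * A * Nx) + 2 * ((L - 1) * A * Dx - A * x * Dd) * (y * A * Nx)
            - 2 * (A * Dx) * (L * y * A * Nx - y * A * x * Nd))^2 * (1 + a4 * y^2 + a6 * y^3)
       = 4 * (A * Dx) * ((y * A * Nx)^3 + a4' * (y^2 * (A * Dx)^2 * (y * A * Nx)) + a6' * (y^3 * (A * Dx)^3))"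
  using xy iso by algebra

lemma poly_eq_nz:
  fixes A B :: "'a::field_char_0 poly"
  assumes "\<And>z. z \<noteq> 0 \<Longrightarrow> poly A z = poly B z"
  shows "A = B"
proof -
  have "\<forall>z. poly ([:0, 1:] * (A - B)) z = 0" using assms by auto
  then have "[:0, 1:] * (A - B) = 0" using poly_all_0_iff_0 by blast
  then show ?thesis by simp
qed


lemma iso_poly_identity:
  fixes N D :: "'a::field_char_0 poly"
  assumes iso: "normalized_isogeny a4 a6 a4' a6' l N D" and l1: "1 \<le> l"
  defines "P \<equiv> pcompose (reflect_poly N) [:0, 0, 1:]"
  defines "Q \<equiv> pcompose (reflect_poly D) [:0, 0, 1:]"
  shows "(smult 2 (Q * P) + [:0, 1:] * (pderiv Q * P - Q * pderiv P))^2 * (1 + smult a4 ([:0, 1:]^4) + smult a6 ([:0, 1:]^6))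
       = smult 4 (Q * (P^3 + smult a4' ([:0, 1:]^4 * Q^2 * P) + smult a6' ([:0, 1:]^6 * Q^3)))"
proof (rule poly_eq_nz)
  fix z :: 'a assume z: "z \<noteq> 0"
  define y where "y = z^2"
  have y0: "y \<noteq> 0" using z unfolding y_def by simp
  define x where "x = inverse y"
  define A where "A = y ^ (l - 1)"
  define L where "L = (of_nat l :: 'a)"
  have dN: "degree N = l" and dD: "degree D = l - 1" using iso unfolding normalized_isogeny_def by auto
  have yl: "y ^ l = y * A" unfolding A_def using l1 by (metis Suc_diff_1 less_le_trans zero_less_one power_Suc)
  have Lm: "of_nat (l - 1) = L - 1" unfolding L_def using l1 by (simp add: of_nat_diff)
  have xy: "x * y = 1" unfolding x_def using y0 by simp
  have sqz: "poly [:0, 0, 1:] z = y" unfolding y_def by (simp add: power2_eq_square)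
  have Pz: "poly P z = y * A * poly N x"
    unfolding P_def x_def poly_pcompose sqz using y0 by (simp add: poly_reflect_poly_nz dN yl)
  have Qz: "poly Q z = A * poly D x"
    unfolding Q_def x_def A_def poly_pcompose sqz using y0 by (simp add: poly_reflect_poly_nz dD)
  have P'z: "z * poly (pderiv P) z = 2 * (L * y * A * poly N x - y * A * x * poly (pderiv N) x)"
  proof -
    have "z * poly (pderiv P) z = 2 * (y * poly (pderiv (reflect_poly N)) y)"
      unfolding P_def y_def by (simp add: pderiv_pcompose poly_pcompose pderiv_pCons power2_eq_square algebra_simps)
    also have "y * poly (pderiv (reflect_poly N)) y = L * y * A * poly N x - y * A * x * poly (pderiv N) x"
      unfolding reflect_deriv[OF y0] dN yl L_def x_def by (simp add: algebra_simps)
    finally show ?thesis .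
  qed
  have Q'z: "z * poly (pderiv Q) z = 2 * ((L - 1) * A * poly D x - A * x * poly (pderiv D) x)"
  proof -
    have "z * poly (pderiv Q) z = 2 * (y * poly (pderiv (reflect_poly D)) y)"
      unfolding Q_def y_def by (simp add: pderiv_pcompose poly_pcompose pderiv_pCons power2_eq_square algebra_simps)
    also have "y * poly (pderiv (reflect_poly D)) y = (L - 1) * A * poly D x - A * x * poly (pderiv D) x"
      unfolding reflect_deriv[OF y0] dD Lm A_def x_def by (simp add: algebra_simps)
    finally show ?thesis .
  qed
  have isox: "(x^3 + a4 * x + a6) * (poly (pderiv N) x * poly D x - poly N x * poly (pderiv D) x)^2
      = poly D x * (poly N x ^ 3 + a4' * (poly N x * poly D x ^ 2) + a6' * poly D x ^ 3)"
  proof -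
    have "wcubic a4 a6 * (pderiv N * D - N * pderiv D) ^ 2
       = D * (N ^ 3 + smult a4' (N * D ^ 2) + smult a6' (D ^ 3))"
      using iso unfolding normalized_isogeny_def by blast
    from arg_cong[OF this, of "\<lambda>q. poly q x"] show ?thesis
      by (simp add: wcubic_def algebra_simps power2_eq_square power3_eq_cube)
  qed
  note FI = iso_field_identity[OF xy isox, of A L]
  have z4: "z^4 = y^2" "z^6 = y^3" unfolding y_def by (simp_all add: power_mult[symmetric])
  show "poly ((smult 2 (Q * P) + [:0, 1:] * (pderiv Q * P - Q * pderiv P))^2 * (1 + smult a4 ([:0, 1:]^4) + smult a6 ([:0, 1:]^6))) z
      = poly (smult 4 (Q * (P^3 + smult a4' ([:0, 1:]^4 * Q^2 * P) + smult a6' ([:0, 1:]^6 * Q^3)))) z"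
  proof -
    have "poly ((smult 2 (Q * P) + [:0, 1:] * (pderiv Q * P - Q * pderiv P))^2 * (1 + smult a4 ([:0, 1:]^4) + smult a6 ([:0, 1:]^6))) z
        = (2 * poly Q z * poly P z + (z * poly (pderiv Q) z) * poly P z - poly Q z * (z * poly (pderiv P) z))^2
           * (1 + a4 * z^4 + a6 * z^6)"
      by (simp add: algebra_simps)
    also have "\<dots> = 4 * poly Q z * (poly P z ^ 3 + a4' * (z^4 * poly Q z ^ 2 * poly P z) + a6' * (z^6 * poly Q z ^ 3))"
      unfolding P'z Q'z Pz Qz z4 using FI by algebra
    also have "\<dots> = poly (smult 4 (Q * (P^3 + smult a4' ([:0, 1:]^4 * Q^2 * P) + smult a6' ([:0, 1:]^6 * Q^3)))) z"
      by (simp add: algebra_simps)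
    finally show ?thesis .
  qed
qed

context vf begin

lemma pint_poly_add: "pint_poly v P \<Longrightarrow> pint_poly v Q \<Longrightarrow> pint_poly v (P + Q)"
  by (simp add: pint_poly_def pdiv_add)

lemma pint_poly_mult: "pint_poly v P \<Longrightarrow> pint_poly v Q \<Longrightarrow> pint_poly v (P * Q)"
  unfolding pint_poly_def coeff_mult
  by (auto intro!: pdiv_sum pdiv_mult[where a=0 and b=0, simplified])

lemma pint_poly_pCons: "pint v a \<Longrightarrow> pint_poly v P \<Longrightarrow> pint_poly v (pCons a P)"
  by (simp add: pint_poly_def coeff_pCons split: nat.split)

lemma pint_poly_0: "pint_poly v 0" by (simp add: pint_poly_def)

lemma pint_poly_pcompose: "pint_poly v P \<Longrightarrow> pint_poly v Q \<Longrightarrow> pint_poly v (pcompose P Q)"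
proof (induction P rule: pCons_induct)
  case 0 then show ?case by (simp add: pint_poly_0)
next
  case (pCons a p)
  have "pint v a" "pint_poly v p" using pCons.prems(1) unfolding pint_poly_def
    by (metis coeff_pCons_0, metis coeff_pCons_Suc)
  then show ?case using pCons by (simp add: pcompose_pCons pint_poly_add pint_poly_mult pint_poly_pCons pint_poly_0)
qed

lemma pint_poly_reflect: "pint_poly v P \<Longrightarrow> pint_poly v (reflect_poly P)"
  by (simp add: pint_poly_def coeff_reflect_poly)

lemma pint_poly_sq: "pint_poly v [:0, 0, 1:]"
  by (intro pint_poly_pCons pint_poly_0) (simp_all add: pint_1)

lemma iso_T:
  fixes N D :: "'a poly"
  assumes iso: "normalized_isogeny a4 a6 a4' a6' l N D" and l1: "1 \<le> l"
    and iN: "pint_poly v N" and iD: "pint_poly v D"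
  shows "\<exists>T. cv v 0 T \<and> Gser a4 a6 * hp a4' a6' T = (fps_deriv T)^2 \<and> T $ 0 = 0 \<and> T $ 1 = 1"
proof -
  define P where "P = pcompose (reflect_poly N) [:0, 0, 1:]"
  define Q where "Q = pcompose (reflect_poly D) [:0, 0, 1:]"
  have PI: "(smult 2 (Q * P) + [:0, 1:] * (pderiv Q * P - Q * pderiv P))^2 * (1 + smult a4 ([:0, 1:]^4) + smult a6 ([:0, 1:]^6))
       = smult 4 (Q * (P^3 + smult a4' ([:0, 1:]^4 * Q^2 * P) + smult a6' ([:0, 1:]^6 * Q^3)))"
    unfolding P_def Q_def by (rule iso_poly_identity[OF iso l1])
  define Pf where "Pf = fps_of_poly P"
  define Qf where "Qf = fps_of_poly Q"
  define Gp where "Gp = (1 :: 'a fps) + fps_const a4 * fps_X ^ 4 + fps_const a6 * fps_X ^ 6"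
  have FI: "(fps_const 2 * (Qf * Pf) + fps_X * (fps_deriv Qf * Pf - Qf * fps_deriv Pf))^2 * Gp
       = fps_const 4 * (Qf * (Pf^3 + fps_const a4' * (fps_X^4 * Qf^2 * Pf) + fps_const a6' * (fps_X^6 * Qf^3)))"
    using arg_cong[OF PI, of fps_of_poly] unfolding Pf_def Qf_def Gp_def
    by (simp only: fps_of_poly_add fps_of_poly_diff fps_of_poly_mult fps_of_poly_smult fps_of_poly_power
        fps_of_poly_pderiv fps_of_poly_fps_X fps_of_poly_1)
  have lN: "lead_coeff N = 1" and lD: "lead_coeff D = 1" using iso unfolding normalized_isogeny_def by auto
  have P0: "Pf $ 0 = 1" unfolding Pf_def P_def using lN by (simp add: fps_of_poly_nth poly_0_coeff_0[symmetric] poly_pcompose)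
  have Q0: "Qf $ 0 = 1" unfolding Qf_def Q_def using lD by (simp add: fps_of_poly_nth poly_0_coeff_0[symmetric] poly_pcompose)
  define IP where "IP = inverse Pf"
  have PIP: "Pf * IP = 1" unfolding IP_def using P0 by (simp add: inverse_mult_eq_1')
  have dIP: "fps_deriv IP = - fps_deriv Pf * IP^2" unfolding IP_def using P0 by (simp add: fps_inverse_deriv)
  define W where "W = fps_X^2 * Qf * IP"
  have dW: "fps_deriv W = fps_const 2 * fps_X * Qf * IP + fps_X^2 * fps_deriv Qf * IP + fps_X^2 * Qf * fps_deriv IP"
    unfolding W_def by (simp add: fps_deriv_power algebra_simps numeral_fps_const)
  have c24: "fps_const (2::'a) * fps_const 2 = fps_const 4" by (simp add: fps_const_mult[symmetric])
  have WE: "(fps_deriv W)^2 * Gp = fps_const 4 * W * (1 + fps_const a4' * W^2 + fps_const a6' * W^3)"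
    using FI PIP dIP dW c24 unfolding W_def by algebra
  define Y where "Y = Qf * IP"
  have Y0: "Y $ 0 = 1" unfolding Y_def IP_def using P0 Q0 by simp
  define Rt where "Rt = fps_radical (\<lambda>k a. 1) 2 Y"
  have RR: "Rt ^ 2 = Y" using power_radical[of Y "\<lambda>k a. 1" 1] Y0 unfolding Rt_def by (simp add: numeral_2_eq_2)
  have R0: "Rt $ 0 = 1" unfolding Rt_def by simp
  define T where "T = fps_X * Rt"
  have TW: "T^2 = W" unfolding T_def W_def using RR unfolding Y_def by (simp add: power_mult_distrib mult.assoc)
  have dTW: "fps_deriv W = fps_const 2 * T * fps_deriv T"
    unfolding TW[symmetric] by (simp add: fps_deriv_power numeral_fps_const power2_eq_square)
  have T0: "T $ 0 = 0" "T $ 1 = 1" unfolding T_def using R0 by simp_all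
  have Tnz: "T \<noteq> 0" using T0 by auto
  have key: "fps_const 4 * T^2 * ((fps_deriv T)^2 * Gp - hp a4' a6' T) = 0"
  proof -
    have "fps_const 4 * T^2 * ((fps_deriv T)^2 * Gp) = (fps_deriv W)^2 * Gp"
      unfolding dTW c24[symmetric] by (simp add: power2_eq_square mult_ac)
    also have "\<dots> = fps_const 4 * W * (1 + fps_const a4' * W^2 + fps_const a6' * W^3)" by (rule WE)
    also have "\<dots> = fps_const 4 * T^2 * hp a4' a6' T"
      unfolding hp_def TW[symmetric] by (simp add: power_mult[symmetric])
    finally show ?thesis by (simp add: algebra_simps)
  qed
  have "fps_const (4::'a) \<noteq> 0" by simp
  then have eqT: "(fps_deriv T)^2 * Gp = hp a4' a6' T" using key Tnz by simp
  have Gp0: "Gp $ 0 = 1" unfolding Gp_def by simp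
  have GG: "Gser a4 a6 = inverse Gp" unfolding Gser_def Gp_def by (simp add: algebra_simps)
  have "Gser a4 a6 * hp a4' a6' T = (fps_deriv T)^2"
  proof -
    have "inverse Gp * Gp = 1" using Gp0 by (simp add: inverse_mult_eq_1)
    then show ?thesis unfolding GG eqT[symmetric] by (metis mult.assoc mult.commute mult_1)
  qed
  moreover have "cv v 0 T"
  proof -
    have "pint_poly v P" unfolding P_def by (intro pint_poly_pcompose pint_poly_reflect iN pint_poly_sq)
    then have cP: "cv v 0 Pf" unfolding Pf_def by (rule cv_of_poly)
    have "pint_poly v Q" unfolding Q_def by (intro pint_poly_pcompose pint_poly_reflect iD pint_poly_sq)
    then have cQ: "cv v 0 Qf" unfolding Qf_def by (rule cv_of_poly)
    have "cv v 0 IP" unfolding IP_def using cP P0 by (rule cv_inverse)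
    then have "cv v 0 Y" unfolding Y_def using cQ cv_mult0 by blast
    then have "cv v 0 Rt" using cv_sqrt[of Rt Y] RR R0 by (simp add: power2_eq_square)
    then show ?thesis unfolding T_def using cv_X cv_mult0 by blast
  qed
  ultimately show ?thesis using T0 by blast
qed

end

context vf begin

definition close :: "int \<Rightarrow> 'a fps \<Rightarrow> 'a fps \<Rightarrow> bool" where
  "close e A B \<longleftrightarrow> cv v 0 A \<and> cv v 0 B \<and> cv v e (A - B)"

lemma close_refl: "cv v 0 A \<Longrightarrow> close e A A" by (simp add: close_def)
lemma close_mono: "close e A B \<Longrightarrow> e' \<le> e \<Longrightarrow> close e' A B" by (auto simp: close_def intro: cv_mono)
lemma close_add: "close e A B \<Longrightarrow> close e A' B' \<Longrightarrow> close e (A + A') (B + B')"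
proof -
  assume "close e A B" "close e A' B'"
  moreover have "A + A' - (B + B') = (A - B) + (A' - B')" by simp
  ultimately show ?thesis unfolding close_def by (metis cv_add)
qed
lemma close_diff: "close e A B \<Longrightarrow> close e A' B' \<Longrightarrow> close e (A - A') (B - B')"
proof -
  assume "close e A B" "close e A' B'"
  moreover have "A - A' - (B - B') = (A - B) - (A' - B')" by simp
  ultimately show ?thesis unfolding close_def by (metis cv_diff)
qed
lemma close_mult: "close e A B \<Longrightarrow> close e A' B' \<Longrightarrow> close e (A * A') (B * B')"
proof -
  assume a: "close e A B" "close e A' B'"
  have "cv v e (A * A' - B * B')"
    using cv_err_mult[of B A' e A B'] a unfolding close_def by auto
  then show ?thesis using a unfolding close_def by (auto intro: cv_mult0)
qed
lemma close_power: "close e A B \<Longrightarrow> close e (A ^ n) (B ^ n)"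
  by (induction n) (auto intro: close_mult close_refl cv_1)
lemma close_cutoff: "close e A B \<Longrightarrow> close e (fps_cutoff n A) (fps_cutoff n B)"
proof -
  assume a: "close e A B"
  have "fps_cutoff n A - fps_cutoff n B = fps_cutoff n (A - B)" by (simp add: fps_cutoff_diff)
  then show ?thesis using a unfolding close_def by (simp add: cv_cutoff)
qed
lemma close_deriv: "close e A B \<Longrightarrow> close e (fps_deriv A) (fps_deriv B)"
proof -
  assume a: "close e A B"
  then show ?thesis using cv_deriv[of e "A - B"] unfolding close_def by (simp add: cv_deriv)
qed
lemma close_const: "pint v a \<Longrightarrow> pint v b \<Longrightarrow> pdiv v e (a - b) \<Longrightarrow> close e (fps_const a) (fps_const b)"
  unfolding close_def by (simp add: cv_const)
lemma close_numeral: "close e (numeral n) (numeral n)" by (rule close_refl[OF cv_numeral])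
lemma close_one: "close e 1 1" by (rule close_refl[OF cv_1])
lemma close_half: "close e (fps_const (1/2)) (fps_const (1/2))" by (rule close_refl[OF cv_const[OF pint_half]])
lemma close_hp: "close e (fps_const a) (fps_const b) \<Longrightarrow> close e (fps_const a') (fps_const b') \<Longrightarrow> close e S T
   \<Longrightarrow> close e (hp a a' S) (hp b b' T)"
  unfolding hp_def by (intro close_add close_mult close_power close_one) auto

lemma integral0_diff: "fps_integral0 (A - B) = fps_integral0 A - (fps_integral0 B :: 'a fps)"
  by (rule fps_ext) (simp add: fps_integral_def algebra_simps)

lemma cutoff_mult_cutoff: "fps_cutoff n (A * fps_cutoff n B) = fps_cutoff n (A * (B :: 'a fps))"
  by (rule fps_ext) (simp add: fps_cutoff_right_mult_nth)

lemma prec_step: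
  fixes Ga Gb :: "'a fps"
  assumes eL: "0 \<le> e - L" and L0: "0 \<le> L"
    and ia: "ninv Ga c4a c6a d Ua Va Ja Sa" and ib: "ninv Gb c4b c6b d Ub Vb Jb Sb"
    and cU: "close e Ua Ub" and cV: "close e Va Vb" and cJ: "close e Ja Jb" and cS: "close e Sa Sb"
    and cG: "close e Ga Gb" and c4: "close e (fps_const c4a) (fps_const c4b)"
    and c6: "close e (fps_const c6a) (fps_const c6b)"
    and Lb: "\<And>r. d < r \<Longrightarrow> r < min (2 * d + 1) m \<Longrightarrow> int (multiplicity p r) \<le> L"
    and sta: "newton_step m Ga (Hpol c4a c6a) (d, Ua, Va, Ja, Sa) = (da, Ua1, Va1, Ja1, Sa1)"
    and stb: "newton_step m Gb (Hpol c4b c6b) (d, Ub, Vb, Jb, Sb) = (db, Ub1, Vb1, Jb1, Sb1)"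
    and Sa1: "cv v 0 Sa1"
  shows "close (e - L) Ua1 Ub1 \<and> close (e - L) Va1 Vb1 \<and> close (e - L) Ja1 Jb1 \<and> close (e - L) Sa1 Sb1"
proof -
  define N where "N = min (2 * d + 1) m"
  define Ia where "Ia = fps_integral0 ((Ga * hp c4a c6a Sa - (fps_deriv Sa) ^ 2) * (Ua1 * Ja1 * fps_const (1 / 2)))"
  define Ib where "Ib = fps_integral0 ((Gb * hp c4b c6b Sb - (fps_deriv Sb) ^ 2) * (Ub1 * Jb1 * fps_const (1 / 2)))"
  have Ua1: "Ua1 = fps_cutoff d (Ua * (2 - fps_deriv Sa * Ua))"
    and Va1: "Va1 = fps_cutoff d ((Va + Ja * hp c4a c6a Sa * (2 - Va * Ja)) * fps_const (1 / 2))"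
    and Ja1: "Ja1 = fps_cutoff d (Ja * (2 - Va1 * Ja))"
    and Sa1e: "Sa1 = fps_cutoff N (Sa + Va1 * Ia)"
    using sta unfolding step_unfold Ia_def N_def by (auto simp: Let_def)
  have Ub1: "Ub1 = fps_cutoff d (Ub * (2 - fps_deriv Sb * Ub))"
    and Vb1: "Vb1 = fps_cutoff d ((Vb + Jb * hp c4b c6b Sb * (2 - Vb * Jb)) * fps_const (1 / 2))"
    and Jb1: "Jb1 = fps_cutoff d (Jb * (2 - Vb1 * Jb))"
    and Sb1e: "Sb1 = fps_cutoff N (Sb + Vb1 * Ib)"
    using stb unfolding step_unfold Ib_def N_def by (auto simp: Let_def)
  have V0: "Va1 $ 0 = 1" using step_V0[OF ia sta] .
  have e0: "0 \<le> e" using eL L0 by simp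
  have cU1: "close e Ua1 Ub1" unfolding Ua1 Ub1
    by (intro close_cutoff close_mult close_diff close_deriv cU cS close_numeral)
  have cHs: "close e (hp c4a c6a Sa) (hp c4b c6b Sb)" by (rule close_hp[OF c4 c6 cS])
  have cV1: "close e Va1 Vb1" unfolding Va1 Vb1
    by (intro close_cutoff close_mult close_diff close_add cV cJ cHs close_numeral close_half)
  have cJ1: "close e Ja1 Jb1" unfolding Ja1 Jb1
    by (intro close_cutoff close_mult close_diff cV1 cJ close_numeral)
  define Qa where "Qa = (Ga * hp c4a c6a Sa - (fps_deriv Sa) ^ 2) * (Ua1 * Ja1 * fps_const (1 / 2))"
  define Qb where "Qb = (Gb * hp c4b c6b Sb - (fps_deriv Sb) ^ 2) * (Ub1 * Jb1 * fps_const (1 / 2))"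
  have cQ: "close e Qa Qb" unfolding Qa_def Qb_def
    by (intro close_mult close_diff close_power close_deriv cG cHs cS cU1 cJ1 close_half)
  have dQa: "fps_X ^ d dvd Qa" unfolding Qa_def using ia unfolding ninv_def by (simp add: dvd_mult2)
  have dQb: "fps_X ^ d dvd Qb" unfolding Qb_def using ib unfolding ninv_def by (simp add: dvd_mult2)
  define Ia' where "Ia' = fps_cutoff N Ia"
  define Ib' where "Ib' = fps_cutoff N Ib"
  have diffI: "cv v (e - L) (Ia' - Ib')"
  proof -
    have "Ia' - Ib' = fps_cutoff N (fps_integral0 (Qa - Qb))"
      unfolding Ia'_def Ib'_def Ia_def Ib_def Qa_def[symmetric] Qb_def[symmetric] integral0_diff fps_cutoff_diff ..
    moreover have "cv v (e - L) (fps_cutoff N (fps_integral0 (Qa - Qb)))"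
    proof (rule cv_integral_div)
      show "cv v e (Qa - Qb)" using cQ unfolding close_def by simp
      fix n assume n: "0 < n" "n < N" "(Qa - Qb) $ (n - 1) \<noteq> 0"
      have "\<not> n - 1 < d"
      proof
        assume "n - 1 < d"
        then have "Qa $ (n - 1) = 0" "Qb $ (n - 1) = 0" using dQa dQb unfolding Xdvd_iff by auto
        then show False using n by simp
      qed
      then show "int (multiplicity p n) \<le> L" using Lb[of n] n unfolding N_def by simp
    qed
    ultimately show ?thesis by simp
  qed
  have cvIa: "cv v 0 Ia'"
  proof -
    have "Sa1 = fps_cutoff N Sa + fps_cutoff N (Va1 * Ia')"
      unfolding Sa1e Ia'_def cutoff_mult_cutoff by (simp add: fps_cutoff_add)
    then have h: "fps_cutoff N (Va1 * Ia') = Sa1 - fps_cutoff N Sa" by simp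
    have "cv v 0 (Sa1 - fps_cutoff N Sa)" using Sa1 cS unfolding close_def by (simp add: cv_diff cv_cutoff)
    then have c1: "cv v 0 (fps_cutoff N (Va1 * Ia'))" unfolding h .
    have cW: "cv v 0 (inverse Va1)" using cV1 V0 unfolding close_def by (simp add: cv_inverse)
    have eq: "Ia' = fps_cutoff N (inverse Va1 * fps_cutoff N (Va1 * Ia'))"
      unfolding cutoff_mult_cutoff using V0
      by (simp add: mult.assoc[symmetric] inverse_mult_eq_1 Ia'_def fps_eq_iff)
    show ?thesis by (subst eq, rule cv_cutoff[OF cv_mult0[OF cW c1]])
  qed
  have cI: "close (e - L) Ia' Ib'"
  proof -
    have "cv v 0 Ib'"
      using cv_close[OF cvIa, of "e - L" Ib'] cv_uminus[OF diffI] eL by simp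
    then show ?thesis using cvIa diffI unfolding close_def by simp
  qed
  have "Sa1 = fps_cutoff N Sa + fps_cutoff N (Va1 * Ia')"
    unfolding Sa1e Ia'_def cutoff_mult_cutoff by (simp add: fps_cutoff_add)
  moreover have "Sb1 = fps_cutoff N Sb + fps_cutoff N (Vb1 * Ib')"
    unfolding Sb1e Ib'_def cutoff_mult_cutoff by (simp add: fps_cutoff_add)
  ultimately have cS1: "close (e - L) Sa1 Sb1"
  proof -
    assume A: "Sa1 = fps_cutoff N Sa + fps_cutoff N (Va1 * Ia')" and B: "Sb1 = fps_cutoff N Sb + fps_cutoff N (Vb1 * Ib')"
    have "close (e - L) (fps_cutoff N Sa + fps_cutoff N (Va1 * Ia')) (fps_cutoff N Sb + fps_cutoff N (Vb1 * Ib'))"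
      by (rule close_add[OF close_cutoff[OF close_mono[OF cS]] close_cutoff[OF close_mult[OF close_mono[OF cV1] cI]]])
        (use L0 in simp_all)
    then show ?thesis unfolding A B .
  qed
  have "close (e - L) Ua1 Ub1" by (rule close_mono[OF cU1]) (use L0 in simp)
  moreover have "close (e - L) Va1 Vb1" by (rule close_mono[OF cV1]) (use L0 in simp)
  moreover have "close (e - L) Ja1 Jb1" by (rule close_mono[OF cJ1]) (use L0 in simp)
  ultimately show ?thesis using cS1 by blast
qed

end

lemma fst_step: "fst (newton_step m G H st) = 2 * fst st"
  by (cases st) (simp add: newton_step_def Let_def)

lemma fst_run: "fst (newton_run m \<alpha> \<beta> G H k) = 2 ^ Suc k"
  by (induction k) (simp_all add: newton_run_def newton_init_def fst_step)

lemma run_Suc: "newton_run m \<alpha> \<beta> G H (Suc k) = newton_step m G H (newton_run m \<alpha> \<beta> G H k)"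
  by (simp add: newton_run_def)

lemma Gser_1: "Gser x y $ 1 = (0 :: 'a::field)"
proof -
  define P where "P = fps_const y * fps_X ^ 6 + fps_const x * fps_X ^ 4 + (1 :: 'a fps)"
  have P0: "P $ 0 = 1" unfolding P_def by simp
  have "(P * inverse P) $ 1 = 0" using P0 by (simp add: inverse_mult_eq_1')
  moreover have "(P * inverse P) $ 1 = P $ 0 * inverse P $ 1 + P $ 1 * inverse P $ 0"
    by (simp add: fps_mult_nth numeral_2_eq_2)
  moreover have "P $ 1 = 0" unfolding P_def by simp
  ultimately show ?thesis using P0 unfolding Gser_def P_def[symmetric] by simp
qed

lemma init_eq: "newton_init 0 1 (Gser x y) (Hpol c4 c6) = (2, 1, 1, 1, (fps_X :: 'a::field fps))"
proof -
  have "poly (pderiv (Hpol c4 c6)) 0 = 0"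
    by (simp add: poly_0_coeff_0 coeff_pderiv Hpol_def)
  then show ?thesis unfolding newton_init_def using Gser_1[of x y] by simp
qed

lemma init_ninv: "ninv (Gser x y) c4 c6 2 1 1 1 (fps_X :: 'a::field_char_0 fps)"
proof -
  define P where "P = fps_const y * fps_X ^ 6 + fps_const x * fps_X ^ 4 + (1 :: 'a fps)"
  have P0: "P $ 0 = 1" unfolding P_def by simp
  have GP: "Gser x y * P = 1" unfolding Gser_def P_def[symmetric] using P0 by (simp add: inverse_mult_eq_1)
  have "Gser x y * hp c4 c6 fps_X - 1 = Gser x y * (hp c4 c6 fps_X - P)" using GP by (simp add: algebra_simps)
  moreover have "fps_X ^ 2 dvd hp c4 c6 fps_X - P"
    unfolding Xdvd_iff P_def hp_def by (auto simp: less_2_cases_iff)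
  ultimately have "fps_X ^ 2 dvd Gser x y * hp c4 c6 fps_X - 1" by simp
  then show ?thesis unfolding ninv_def by (auto simp: hp_def)
qed

lemma run_inv:
  assumes "2 ^ Suc k < m - 1"
  shows "case newton_run m 0 1 (Gser x y) (Hpol c4 c6) k of (d, U, V, J, S) \<Rightarrow>
           ninv (Gser x y) c4 c6 d U V J (S :: 'a::field_char_0 fps)"
  using assms
proof (induction k)
  case 0 then show ?case by (simp add: newton_run_def init_eq init_ninv)
next
  case (Suc k)
  have lt: "2 ^ Suc k < m - 1" using Suc.prems by (simp add: power_Suc) 
  obtain d U V J S where rk: "newton_run m 0 1 (Gser x y) (Hpol c4 c6) k = (d, U, V, J, S)"
    by (metis prod_cases5)
  have d: "d = 2 ^ Suc k" using fst_run[of m 0 1 "Gser x y" "Hpol c4 c6" k] rk by simp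
  have inv: "ninv (Gser x y) c4 c6 d U V J S" using Suc.IH[OF lt] rk by simp
  obtain d' U1 V1 J1 S1 where st: "newton_step m (Gser x y) (Hpol c4 c6) (d, U, V, J, S) = (d', U1, V1, J1, S1)"
    by (metis prod_cases5)
  have "2 * d + 1 \<le> m" using Suc.prems d by simp
  then have "ninv (Gser x y) c4 c6 d' U1 V1 J1 S1" by (rule step_facts(3)[OF inv st])
  then show ?case using run_Suc[of m 0 1 "Gser x y" "Hpol c4 c6" k] rk st by simp
qed

definition closeSt :: "('a::field_char_0 \<Rightarrow> int) \<Rightarrow> int \<Rightarrow> 'a nstate \<Rightarrow> 'a nstate \<Rightarrow> bool" where
  "closeSt v e st1 st2 = (case st1 of (d, U, V, J, S) \<Rightarrow> case st2 of (d', U', V', J', S') \<Rightarrow>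
     cv v 0 U \<and> cv v 0 U' \<and> cv v e (U - U') \<and> cv v 0 V \<and> cv v 0 V' \<and> cv v e (V - V') \<and>
     cv v 0 J \<and> cv v 0 J' \<and> cv v e (J - J') \<and> cv v 0 S \<and> cv v 0 S' \<and> cv v e (S - S'))"

context vf begin

lemma run_S_int:
  fixes T :: "'a fps"
  assumes T: "cv v 0 T" "Gser x y * hp c4 c6 T = (fps_deriv T)^2" "T $ 0 = 0" "T $ 1 = 1"
    and k: "\<forall>j<k. 2 ^ Suc j < m - 1"
  shows "cv v 0 (snd (snd (snd (snd (newton_run m 0 1 (Gser x y) (Hpol c4 c6) k)))))"
proof (cases k)
  case 0 then show ?thesis by (simp add: newton_run_def init_eq cv_X)
next
  case (Suc j)
  have lt: "2 ^ Suc j < m - 1" using k Suc by simp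
  obtain d U V J S where rk: "newton_run m 0 1 (Gser x y) (Hpol c4 c6) j = (d, U, V, J, S)"
    by (metis prod_cases5)
  have inv: "ninv (Gser x y) c4 c6 d U V J S" using run_inv[OF lt, of x y c4 c6] rk by simp
  obtain d' U1 V1 J1 S1 where st: "newton_step m (Gser x y) (Hpol c4 c6) (d, U, V, J, S) = (d', U1, V1, J1, S1)"
    by (metis prod_cases5)
  obtain S2 where S2: "S1 = fps_cutoff (min (2 * d + 1) m) S2"
      "fps_X ^ (2 * d) dvd (Gser x y * hp c4 c6 S2 - (fps_deriv S2)^2)" "S2 $ 0 = 0" "S2 $ 1 = 1"
    using step_facts(2)[OF inv st] by blast
  have "fps_X ^ Suc (2 * d) dvd (S2 - T)" using ode_unique[OF S2(2) T(2) S2(3) T(3) S2(4) T(4)] .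
  then have eq: "\<And>i. i < Suc (2 * d) \<Longrightarrow> S2 $ i = T $ i" unfolding Xdvd_iff by simp
  have "cv v 0 S1" unfolding S2(1) cv_def
    using eq T(1) unfolding cv_def by auto
  moreover have "newton_run m 0 1 (Gser x y) (Hpol c4 c6) k = (d', U1, V1, J1, S1)"
    using run_Suc[of m 0 1 "Gser x y" "Hpol c4 c6" j] rk st Suc by simp
  ultimately show ?thesis by simp
qed

lemma close_Gser:
  assumes "pint v a4" "pint v a6" "pint v b4" "pint v b6" "pdiv v e (a4 - b4)" "pdiv v e (a6 - b6)"
  shows "close e (Gser a4 a6) (Gser b4 b6)"
proof -
  define Pa where "Pa = fps_const a6 * fps_X ^ 6 + fps_const a4 * fps_X ^ 4 + (1 :: 'a fps)"
  define Pb where "Pb = fps_const b6 * fps_X ^ 6 + fps_const b4 * fps_X ^ 4 + (1 :: 'a fps)"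
  have cP: "close e Pa Pb" unfolding Pa_def Pb_def
    by (intro close_add close_mult close_power close_const close_refl[OF cv_X] close_one) (use assms in auto)
  have Pa0: "Pa $ 0 = 1" "Pb $ 0 = 1" unfolding Pa_def Pb_def by simp_all
  have ga: "Gser a4 a6 * Pa = 1" "Gser b4 b6 * Pb = 1"
    unfolding Gser_def Pa_def[symmetric] Pb_def[symmetric] using Pa0 by (simp_all add: inverse_mult_eq_1)
  have ca: "cv v 0 (Gser a4 a6)" "cv v 0 (Gser b4 b6)"
    unfolding Gser_def Pa_def[symmetric] Pb_def[symmetric] using cP Pa0 unfolding close_def
    by (simp_all add: cv_inverse)
  have "Gser a4 a6 - Gser b4 b6 = Gser a4 a6 * Gser b4 b6 * (Pb - Pa)"
    using ga by algebra
  moreover have "cv v e (Pb - Pa)" using cP unfolding close_def using cv_uminus[of e "Pa - Pb"] by simp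
  ultimately have "cv v e (Gser a4 a6 - Gser b4 b6)" using ca by (metis cv_mult0)
  then show ?thesis using ca unfolding close_def by simp
qed


lemma Lsum_le:
  assumes "\<forall>j<k. 2 ^ Suc j < 4 * l - 1"
  shows "(\<Sum>i\<in>{1..k}. LpLoss p l i) \<le> Loss p l"
proof -
  have fin: "finite {i. 1 \<le> i \<and> 2 ^ i < 4 * l - 1}"
  proof (rule finite_subset)
    show "{i. 1 \<le> i \<and> 2 ^ i < 4 * l - 1} \<subseteq> {..<4 * l}"
    proof
      fix i assume "i \<in> {i. 1 \<le> i \<and> 2 ^ i < 4 * l - 1}"
      then have "2 ^ i < 4 * l - 1" by auto
      moreover have "i < 2 ^ i" by (rule less_exp)
      ultimately have "i < 4 * l - 1" by (rule less_trans[rotated])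
      then show "i \<in> {..<4 * l}" by simp
    qed
  qed simp
  have sub: "{1..k} \<subseteq> {i. 1 \<le> i \<and> 2 ^ i < 4 * l - 1}"
  proof
    fix i assume i: "i \<in> {1..k}"
    then have "i - 1 < k" by auto
    then have "2 ^ Suc (i - 1) < 4 * l - 1" using assms by blast
    moreover have "Suc (i - 1) = i" using i by auto
    ultimately have "2 ^ i < 4 * l - 1" by simp
    then show "i \<in> {i. 1 \<le> i \<and> 2 ^ i < 4 * l - 1}" using i by auto
  qed
  show ?thesis unfolding Loss_def by (rule sum_mono2[OF fin sub]) simp
qed

lemma LpLoss_bound:
  assumes "2 ^ Suc k < r" "r < min (2 * 2 ^ Suc k + 1) (4 * l)"
  shows "int (multiplicity p r) \<le> int (LpLoss p l (Suc k))"
proof -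
  have fin: "finite {PDiv p r | r. 2 ^ Suc k + 1 \<le> r \<and> r \<le> min (2 ^ (Suc k + 1)) (4 * l - 1)}"
  proof -
    have "{PDiv p r | r. 2 ^ Suc k + 1 \<le> r \<and> r \<le> min (2 ^ (Suc k + 1)) (4 * l - 1)}
        \<subseteq> PDiv p ` {..4 * l}" by auto
    then show ?thesis by (rule finite_subset) simp
  qed
  have "PDiv p r \<in> {PDiv p r | r. 2 ^ Suc k + 1 \<le> r \<and> r \<le> min (2 ^ (Suc k + 1)) (4 * l - 1)}"
    using assms by auto
  then have "PDiv p r \<le> LpLoss p l (Suc k)" unfolding LpLoss_def using fin by (simp add: Max_ge)
  then show ?thesis by (simp add: PDiv_def)
qed

lemma prec_run:
  fixes a4 a6 a4' a6' b4 b6 b4' b6' :: 'a and T :: "'a fps"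
  assumes ia: "pint v a4" "pint v a6" "pint v a4'" "pint v a6'"
    and ib: "pint v b4" "pint v b6" "pint v b4'" "pint v b6'"
    and dif: "pdiv v (int \<mu>) (a4 - b4)" "pdiv v (int \<mu>) (a6 - b6)"
       "pdiv v (int \<mu>) (a4' - b4')" "pdiv v (int \<mu>) (a6' - b6')"
    and T: "cv v 0 T" "Gser a4 a6 * hp a4' a6' T = (fps_deriv T)^2" "T $ 0 = 0" "T $ 1 = 1"
    and muL: "int (Loss p l) < int \<mu>"
  shows "(\<forall>j<k. 2 ^ Suc j < 4 * l - 1) \<Longrightarrow>
     closeSt v (int \<mu> - int (\<Sum>i\<in>{1..k}. LpLoss p l i))
       (newton_run (4 * l) 0 1 (Gser a4 a6) (Hpol a4' a6') k)
       (newton_run (4 * l) 0 1 (Gser b4 b6) (Hpol b4' b6') k)"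
proof (induction k)
  case 0
  show ?case by (simp add: newton_run_def init_eq closeSt_def cv_1 cv_X)
next
  case (Suc k)
  define m where "m = 4 * l"
  have pre: "\<forall>j<k. 2 ^ Suc j < 4 * l - 1" using Suc.prems by auto
  have lt: "2 ^ Suc k < m - 1" using Suc.prems unfolding m_def by auto
  define e where "e = int \<mu> - int (\<Sum>i\<in>{1..k}. LpLoss p l i)"
  define L where "L = int (LpLoss p l (Suc k))"
  have IH: "closeSt v e (newton_run m 0 1 (Gser a4 a6) (Hpol a4' a6') k)
       (newton_run m 0 1 (Gser b4 b6) (Hpol b4' b6') k)" using Suc.IH[OF pre] unfolding e_def m_def .
  have sumS: "(\<Sum>i\<in>{1..Suc k}. LpLoss p l i) = (\<Sum>i\<in>{1..k}. LpLoss p l i) + LpLoss p l (Suc k)"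
    by (simp add: atLeastAtMostSuc_conv add.commute)
  have eL: "e - L = int \<mu> - int (\<Sum>i\<in>{1..Suc k}. LpLoss p l i)" unfolding e_def L_def sumS by simp
  have le: "(\<Sum>i\<in>{1..Suc k}. LpLoss p l i) \<le> Loss p l" by (rule Lsum_le[OF Suc.prems])
  have eL0: "0 \<le> e - L" unfolding eL using le muL by linarith
  have L0: "0 \<le> L" unfolding L_def by simp
  have emu: "e \<le> int \<mu>" unfolding e_def using of_nat_0_le_iff[of "\<Sum>i\<in>{1..k}. LpLoss p l i"] by linarith
  obtain d Ua Va Ja Sa where ra: "newton_run m 0 1 (Gser a4 a6) (Hpol a4' a6') k = (d, Ua, Va, Ja, Sa)"
    by (metis prod_cases5)
  obtain d2 Ub Vb Jb Sb where rb: "newton_run m 0 1 (Gser b4 b6) (Hpol b4' b6') k = (d2, Ub, Vb, Jb, Sb)"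
    by (metis prod_cases5)
  have d: "d = 2 ^ Suc k" using fst_run[of m 0 1 "Gser a4 a6" "Hpol a4' a6'" k] ra by simp
  have d2: "d2 = 2 ^ Suc k" using fst_run[of m 0 1 "Gser b4 b6" "Hpol b4' b6'" k] rb by simp
  have inva: "ninv (Gser a4 a6) a4' a6' d Ua Va Ja Sa" using run_inv[OF lt, of a4 a6 a4' a6'] ra by simp
  have invb: "ninv (Gser b4 b6) b4' b6' d Ub Vb Jb Sb" using run_inv[OF lt, of b4 b6 b4' b6'] rb d d2 by simp
  have cl: "close e Ua Ub" "close e Va Vb" "close e Ja Jb" "close e Sa Sb"
    using IH ra rb unfolding closeSt_def close_def by auto
  have cG: "close e (Gser a4 a6) (Gser b4 b6)"
    by (rule close_mono[OF close_Gser[OF ia(1,2) ib(1,2) dif(1,2)] emu])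
  have c4: "close e (fps_const a4') (fps_const b4')"
    by (rule close_mono[OF close_const[OF ia(3) ib(3) dif(3)] emu])
  have c6: "close e (fps_const a6') (fps_const b6')"
    by (rule close_mono[OF close_const[OF ia(4) ib(4) dif(4)] emu])
  obtain da Ua1 Va1 Ja1 Sa1 where sta: "newton_step m (Gser a4 a6) (Hpol a4' a6') (d, Ua, Va, Ja, Sa) = (da, Ua1, Va1, Ja1, Sa1)"
    by (metis prod_cases5)
  obtain db Ub1 Vb1 Jb1 Sb1 where stb: "newton_step m (Gser b4 b6) (Hpol b4' b6') (d, Ub, Vb, Jb, Sb) = (db, Ub1, Vb1, Jb1, Sb1)"
    by (metis prod_cases5)
  have rSa: "newton_run m 0 1 (Gser a4 a6) (Hpol a4' a6') (Suc k) = (da, Ua1, Va1, Ja1, Sa1)"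
    using run_Suc[of m 0 1 "Gser a4 a6" "Hpol a4' a6'" k] ra sta by simp
  have rSb: "newton_run m 0 1 (Gser b4 b6) (Hpol b4' b6') (Suc k) = (db, Ub1, Vb1, Jb1, Sb1)"
    using run_Suc[of m 0 1 "Gser b4 b6" "Hpol b4' b6'" k] rb stb d d2 by simp
  have Sa1: "cv v 0 Sa1"
    using run_S_int[OF T, of "Suc k" m] Suc.prems rSa unfolding m_def by simp
  have Lb: "\<And>r. d < r \<Longrightarrow> r < min (2 * d + 1) m \<Longrightarrow> int (multiplicity p r) \<le> L"
    unfolding L_def d m_def by (rule LpLoss_bound)
  have "close (e - L) Ua1 Ub1 \<and> close (e - L) Va1 Vb1 \<and> close (e - L) Ja1 Jb1 \<and> close (e - L) Sa1 Sb1"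
    by (rule prec_step[OF eL0 L0 inva invb cl cG c4 c6 Lb sta stb Sa1])
  then show ?case unfolding rSa[unfolded m_def] rSb[unfolded m_def] closeSt_def eL[symmetric] close_def by simp
qed

end

theorem lemma4p2:
  fixes p l \<mu> :: nat and v :: "'a::field_char_0 \<Rightarrow> int"
    and a4 a6 a4' a6' :: 'a and N D :: "'a poly"
  assumes "prime p" "p > 3"
    and "unram_padic_field p v"
    and "prime l" "l > 2" "l \<noteq> p"
    and "pint v a4" "pint v a6" "pint v a4'" "pint v a6'"
    and "wdisc a4 a6 \<noteq> 0" "v (wdisc a4 a6) = 0"
    and "wdisc a4' a6' \<noteq> 0" "v (wdisc a4' a6') = 0"
    and "normalized_isogeny a4 a6 a4' a6' l N D"
    and "pint_poly v N" "pint_poly v D" "red_coprime v N D"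
    and "int \<mu> > int (Loss p l)"
  shows "\<forall>b4 b6 b4' b6' :: 'a.
           pint v b4 \<and> pint v b6 \<and> pint v b4' \<and> pint v b6' \<and>
           pdiv v (int \<mu>) (b4 - a4) \<and> pdiv v (int \<mu>) (b6 - a6) \<and>
           pdiv v (int \<mu>) (b4' - a4') \<and> pdiv v (int \<mu>) (b6' - a6') \<longrightarrow>
             (\<forall>st \<in> newton_states (4 * l) 0 1 (Gser b4 b6) (Hpol b4' b6'). state_pint v st) \<and>
             (\<forall>n. pdiv v (int \<mu> - int (Loss p l))
                    (newton_result (4 * l) 0 1 (Gser b4 b6) (Hpol b4' b6') $ n
                     - newton_result (4 * l) 0 1 (Gser a4 a6) (Hpol a4' a6') $ n))"
proof -
  note A = assms
  interpret vf p v
    using A(1,2,3) unfolding unram_padic_field_def by unfold_locales auto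
  obtain T where T: "cv v 0 T" "Gser a4 a6 * hp a4' a6' T = (fps_deriv T)^2" "T $ 0 = 0" "T $ 1 = 1"
    using iso_T[OF A(15) _ A(16,17)] A(5) by auto
  show ?thesis
  proof (intro allI impI)
    fix b4 b6 b4' b6' :: 'a
    assume B: "pint v b4 \<and> pint v b6 \<and> pint v b4' \<and> pint v b6' \<and>
           pdiv v (int \<mu>) (b4 - a4) \<and> pdiv v (int \<mu>) (b6 - a6) \<and>
           pdiv v (int \<mu>) (b4' - a4') \<and> pdiv v (int \<mu>) (b6' - a6')"
    have dif: "pdiv v (int \<mu>) (a4 - b4)" "pdiv v (int \<mu>) (a6 - b6)"
       "pdiv v (int \<mu>) (a4' - b4')" "pdiv v (int \<mu>) (a6' - b6')"
      using B pdiv_uminus_iff by (metis minus_diff_eq)+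
    have ib: "pint v b4" "pint v b6" "pint v b4'" "pint v b6'" using B by auto
    note PR = prec_run[OF A(7,8,9,10) ib dif T A(19)]
    have PR': "\<And>k. \<forall>j<k. 2 ^ Suc j < 4 * l - 1 \<Longrightarrow>
       closeSt v (int \<mu> - int (\<Sum>i\<in>{1..k}. LpLoss p l i))
         (newton_run (4 * l) 0 1 (Gser a4 a6) (Hpol a4' a6') k)
         (newton_run (4 * l) 0 1 (Gser b4 b6) (Hpol b4' b6') k)"
      using PR B by blast
    have part1: "\<forall>st \<in> newton_states (4 * l) 0 1 (Gser b4 b6) (Hpol b4' b6'). state_pint v st"
    proof
      fix st assume "st \<in> newton_states (4 * l) 0 1 (Gser b4 b6) (Hpol b4' b6')"
      then obtain k where k: "st = newton_run (4 * l) 0 1 (Gser b4 b6) (Hpol b4' b6') k"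
        "\<forall>j<k. fst (newton_run (4 * l) 0 1 (Gser b4 b6) (Hpol b4' b6') j) < 4 * l - 1"
        unfolding newton_states_def by blast
      have "\<forall>j<k. 2 ^ Suc j < 4 * l - 1" using k(2) by (simp add: fst_run)
      from PR'[OF this] show "state_pint v st" unfolding k(1)
        by (cases "newton_run (4 * l) 0 1 (Gser a4 a6) (Hpol a4' a6') k";
            cases "newton_run (4 * l) 0 1 (Gser b4 b6) (Hpol b4' b6') k")
          (simp add: closeSt_def state_pint_def pint_fps_def cv_def)
    qed
    define ks where "ks = (LEAST k. \<not> 2 ^ Suc k < 4 * l - 1)"
    have ksl: "\<forall>j<ks. 2 ^ Suc j < 4 * l - 1" unfolding ks_def using not_less_Least by blast
    have resA: "newton_result (4 * l) 0 1 (Gser a4 a6) (Hpol a4' a6') =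
        snd (snd (snd (snd (newton_run (4 * l) 0 1 (Gser a4 a6) (Hpol a4' a6') ks))))"
      unfolding newton_result_def ks_def by (simp add: fst_run)
    have resB: "newton_result (4 * l) 0 1 (Gser b4 b6) (Hpol b4' b6') =
        snd (snd (snd (snd (newton_run (4 * l) 0 1 (Gser b4 b6) (Hpol b4' b6') ks))))"
      unfolding newton_result_def ks_def by (simp add: fst_run)
    have cl: "closeSt v (int \<mu> - int (\<Sum>i\<in>{1..ks}. LpLoss p l i))
         (newton_run (4 * l) 0 1 (Gser a4 a6) (Hpol a4' a6') ks)
         (newton_run (4 * l) 0 1 (Gser b4 b6) (Hpol b4' b6') ks)" by (rule PR'[OF ksl])
    have le: "(\<Sum>i\<in>{1..ks}. LpLoss p l i) \<le> Loss p l" by (rule Lsum_le[OF ksl])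
    have cvS: "cv v (int \<mu> - int (\<Sum>i\<in>{1..ks}. LpLoss p l i))
        (newton_result (4 * l) 0 1 (Gser a4 a6) (Hpol a4' a6') - newton_result (4 * l) 0 1 (Gser b4 b6) (Hpol b4' b6'))"
      unfolding resA resB using cl
      by (cases "newton_run (4 * l) 0 1 (Gser a4 a6) (Hpol a4' a6') ks";
          cases "newton_run (4 * l) 0 1 (Gser b4 b6) (Hpol b4' b6') ks") (simp add: closeSt_def)
    have part2: "\<forall>n. pdiv v (int \<mu> - int (Loss p l))
                    (newton_result (4 * l) 0 1 (Gser b4 b6) (Hpol b4' b6') $ n
                     - newton_result (4 * l) 0 1 (Gser a4 a6) (Hpol a4' a6') $ n)"
    proof
      fix n
      have "pdiv v (int \<mu> - int (\<Sum>i\<in>{1..ks}. LpLoss p l i))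
        (newton_result (4 * l) 0 1 (Gser a4 a6) (Hpol a4' a6') $ n - newton_result (4 * l) 0 1 (Gser b4 b6) (Hpol b4' b6') $ n)"
        using cvS unfolding cv_def by simp
      then have "pdiv v (int \<mu> - int (Loss p l))
        (newton_result (4 * l) 0 1 (Gser a4 a6) (Hpol a4' a6') $ n - newton_result (4 * l) 0 1 (Gser b4 b6) (Hpol b4' b6') $ n)"
        by (rule pdiv_mono) (use le in \<open>simp del: of_nat_sum\<close>)
      then show "pdiv v (int \<mu> - int (Loss p l))
                    (newton_result (4 * l) 0 1 (Gser b4 b6) (Hpol b4' b6') $ n
                     - newton_result (4 * l) 0 1 (Gser a4 a6) (Hpol a4' a6') $ n)"
        using pdiv_uminus_iff by (metis minus_diff_eq)
    qed
    show "(\<forall>st \<in> newton_states (4 * l) 0 1 (Gser b4 b6) (Hpol b4' b6'). state_pint v st) \<and>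
             (\<forall>n. pdiv v (int \<mu> - int (Loss p l))
                    (newton_result (4 * l) 0 1 (Gser b4 b6) (Hpol b4' b6') $ n
                     - newton_result (4 * l) 0 1 (Gser a4 a6) (Hpol a4' a6') $ n))"
      using part1 part2 by blast
  qed
qed

end
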